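(* Let $\tau\in\mathfrak S(1243,2143)$ be nonempty and let $k=|\tau|+1$; write $\tau,k$ for the permutation obtained by appending $k$ to $\tau$. Let $G_{\tau,k}(x)$ be the generating function $\sum x^{|\pi|}$ over permutations $\pi\in\mathfrak S(1243,2143)$ containing exactly one subsequence of type $\tau,k$; let $H_\tau(x)=\sum x^{|\pi|}$ over $\pi\in\mathfrak S(1243,2143)$ avoiding $\tau$; and let $J_\tau(x)=\sum x^{|\pi|}$ over $\pi\in\mathfrak S(1243,2143)$ that avoid $\tau,k$ and contain exactly one subsequence of type $\tau$. Then $$G_{\tau,k}(x)=\frac{x\,J_\tau(x)}{\bigl(2-x-H_\tau(x)\bigr)^2}.$$
   Context: $\mathfrak S(1243,2143)$ is the set of all permutations (including the empty one) with no subsequence of the same relative order as $1243$ or $2143$. A subsequence of $\pi$ has type $\sigma$ if its entries have the same relative order as $\sigma$; $\pi$ avoids $\sigma$ if it has no subsequence of type $\sigma$. $|\pi|$ is the length of $\pi$. *)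

theory Defs
  imports Main "HOL-Computational_Algebra.Formal_Power_Series"
begin

definition is_perm :: "nat list \<Rightarrow> bool" where
  "is_perm xs \<longleftrightarrow> distinct xs \<and> set xs = {1..length xs}"

definition same_order :: "nat list \<Rightarrow> nat list \<Rightarrow> bool" where
  "same_order xs ys \<longleftrightarrow> length xs = length ys \<and>
     (\<forall>i<length xs. \<forall>j<length xs. (xs ! i < xs ! j) = (ys ! i < ys ! j))"

definition occurrences :: "nat list \<Rightarrow> nat list \<Rightarrow> nat set set" where
  "occurrences \<pi> \<sigma> = {I. I \<subseteq> {0..<length \<pi>} \<and> card I = length \<sigma> \<and> same_order (nths \<pi> I) \<sigma>}"

definition avoids :: "nat list \<Rightarrow> nat list \<Rightarrow> bool" where
  "avoids \<pi> \<sigma> \<longleftrightarrow> occurrences \<pi> \<sigma> = {}"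

definition Av_1243_2143 :: "nat list set" where
  "Av_1243_2143 = {\<pi>. is_perm \<pi> \<and> avoids \<pi> [1,2,4,3] \<and> avoids \<pi> [2,1,4,3]}"

definition gf :: "nat list set \<Rightarrow> rat fps" where
  "gf A = Abs_fps (\<lambda>n. of_nat (card {\<pi> \<in> A. length \<pi> = n}))"

end

theory Submission
  imports Defs
begin


lemma zip_upt_map: "zip xs [0..<length xs] = map (\<lambda>i. (xs!i, i)) [0..<length xs]"
  by (rule nth_equalityI) auto

lemma nths_eq_filter: "nths xs I = map ((!) xs) (filter (\<lambda>i. i \<in> I) [0..<length xs])"
  unfolding nths_def zip_upt_map by (simp add: filter_map comp_def)

lemma sorted_filter_upt:
  assumes "sorted_wrt (<) ix" "\<forall>i\<in>set ix. i < n"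
  shows "filter (\<lambda>i. i \<in> set ix) [0..<n] = ix"
  apply (rule sorted_distinct_set_unique)
  using assms by (auto simp: strict_sorted_iff sorted_wrt_filter)

lemma nths_sorted: "sorted_wrt (<) ix \<Longrightarrow> \<forall>i\<in>set ix. i < length xs \<Longrightarrow> nths xs (set ix) = map ((!) xs) ix"
  by (simp add: nths_eq_filter sorted_filter_upt)

definition occL :: "nat list \<Rightarrow> nat list \<Rightarrow> nat list set" where
  "occL \<pi> p = {ix. sorted_wrt (<) ix \<and> length ix = length p \<and> (\<forall>i\<in>set ix. i < length \<pi>) \<and> same_order (map ((!) \<pi>) ix) p}"

lemma occurrences_eq: "occurrences \<pi> p = set ` occL \<pi> p"
proof
  show "set ` occL \<pi> p \<subseteq> occurrences \<pi> p"
  proof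
    fix I assume "I \<in> set ` occL \<pi> p"
    then obtain ix where I: "I = set ix" "ix \<in> occL \<pi> p" by auto
    then have "distinct ix" by (auto simp: occL_def strict_sorted_iff)
    then show "I \<in> occurrences \<pi> p" using I
      by (auto simp: occL_def occurrences_def nths_sorted distinct_card)
  qed
  show "occurrences \<pi> p \<subseteq> set ` occL \<pi> p"
  proof
    fix I assume I: "I \<in> occurrences \<pi> p"
    then have fin: "finite I" by (auto simp: occurrences_def intro: finite_subset)
    let ?ixs = "sorted_list_of_set I"
    have e: "nths \<pi> I = map ((!) \<pi>) ?ixs"
      using nths_sorted[of ?ixs \<pi>] I fin by (force simp: occurrences_def)
    have "?ixs \<in> occL \<pi> p" using I fin
      by (auto simp: occL_def occurrences_def e[symmetric])
    moreover have "set ?ixs = I" using fin by simp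
    ultimately show "I \<in> set ` occL \<pi> p" by (metis image_eqI)
  qed
qed

lemma inj_set_occL: "inj_on set (occL \<pi> p)"
  by (rule inj_onI) (auto simp: occL_def strict_sorted_iff intro: sorted_distinct_set_unique)

lemma card_occurrences: "card (occurrences \<pi> p) = card (occL \<pi> p)"
  by (simp add: occurrences_eq card_image inj_set_occL)

lemma avoids_occL: "avoids \<pi> p \<longleftrightarrow> occL \<pi> p = {}"
  by (simp add: avoids_def occurrences_eq)



lemma same_order4: "same_order [a,b,c,d] [x1,x2,x3,x4::nat] \<longleftrightarrow>
  ((a<b) = (x1<x2) \<and> (a<c) = (x1<x3) \<and> (a<d) = (x1<x4) \<and>
   (b<a) = (x2<x1) \<and> (b<c) = (x2<x3) \<and> (b<d) = (x2<x4) \<and>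
   (c<a) = (x3<x1) \<and> (c<b) = (x3<x2) \<and> (c<d) = (x3<x4) \<and>
   (d<a) = (x4<x1) \<and> (d<b) = (x4<x2) \<and> (d<c) = (x4<x3))"
  by (simp add: same_order_def All_less_Suc2 numeral_eq_Suc)

lemma occL4: "ix \<in> occL \<pi> [x1,x2,x3,x4] \<longleftrightarrow> (\<exists>i1 i2 i3 i4. ix = [i1,i2,i3,i4] \<and> i1<i2 \<and> i2<i3 \<and> i3<i4 \<and> i4 < length \<pi> \<and>
     same_order [\<pi>!i1,\<pi>!i2,\<pi>!i3,\<pi>!i4] [x1,x2,x3,x4])"
proof
  assume h: "ix \<in> occL \<pi> [x1,x2,x3,x4]"
  then have "length ix = 4" by (simp add: occL_def)
  then obtain i1 i2 i3 i4 where ix: "ix = [i1,i2,i3,i4]"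
    by (auto simp: numeral_eq_Suc length_Suc_conv)
  show "\<exists>i1 i2 i3 i4. ix = [i1,i2,i3,i4] \<and> i1<i2 \<and> i2<i3 \<and> i3<i4 \<and> i4 < length \<pi> \<and>
     same_order [\<pi>!i1,\<pi>!i2,\<pi>!i3,\<pi>!i4] [x1,x2,x3,x4]"
    using h ix by (auto simp: occL_def)
next
  assume "\<exists>i1 i2 i3 i4. ix = [i1,i2,i3,i4] \<and> i1<i2 \<and> i2<i3 \<and> i3<i4 \<and> i4 < length \<pi> \<and>
     same_order [\<pi>!i1,\<pi>!i2,\<pi>!i3,\<pi>!i4] [x1,x2,x3,x4]"
  then show "ix \<in> occL \<pi> [x1,x2,x3,x4]" by (auto simp: occL_def)
qed

definition cls :: "nat list \<Rightarrow> bool" where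
  "cls \<pi> \<longleftrightarrow> \<not>(\<exists>i1 i2 i3 i4. i1 < i2 \<and> i2 < i3 \<and> i3 < i4 \<and> i4 < length \<pi> \<and>
      \<pi>!i1 < \<pi>!i4 \<and> \<pi>!i2 < \<pi>!i4 \<and> \<pi>!i4 < \<pi>!i3)"

lemma Av_iff: "\<pi> \<in> Av_1243_2143 \<longleftrightarrow> is_perm \<pi> \<and> cls \<pi>"
proof
  assume h: "\<pi> \<in> Av_1243_2143"
  then have p: "is_perm \<pi>" and a1: "occL \<pi> [1,2,4,3] = {}" and a2: "occL \<pi> [2,1,4,3] = {}"
    by (auto simp: Av_1243_2143_def avoids_occL)
  have d: "distinct \<pi>" using p by (simp add: is_perm_def)
  have "cls \<pi>"
    unfolding cls_def
  proof
    assume "\<exists>i1 i2 i3 i4. i1 < i2 \<and> i2 < i3 \<and> i3 < i4 \<and> i4 < length \<pi> \<and>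
      \<pi>!i1 < \<pi>!i4 \<and> \<pi>!i2 < \<pi>!i4 \<and> \<pi>!i4 < \<pi>!i3"
    then obtain i1 i2 i3 i4 where q: "i1 < i2" "i2 < i3" "i3 < i4" "i4 < length \<pi>"
      "\<pi>!i1 < \<pi>!i4" "\<pi>!i2 < \<pi>!i4" "\<pi>!i4 < \<pi>!i3" by blast
    have "\<pi>!i1 \<noteq> \<pi>!i2" using d q by (simp add: nth_eq_iff_index_eq)
    then consider "\<pi>!i1 < \<pi>!i2" | "\<pi>!i2 < \<pi>!i1" by linarith
    then show False
    proof cases
      case 1
      then have "[i1,i2,i3,i4] \<in> occL \<pi> [1,2,4,3]" using q
        by (subst occL4) (auto simp: same_order4)
      then show False using a1 by simp
    next
      case 2
      then have "[i1,i2,i3,i4] \<in> occL \<pi> [2,1,4,3]" using q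
        by (subst occL4) (auto simp: same_order4)
      then show False using a2 by simp
    qed
  qed
  then show "is_perm \<pi> \<and> cls \<pi>" using p by simp
next
  assume h: "is_perm \<pi> \<and> cls \<pi>"
  have "occL \<pi> [1,2,4,3] = {}"
  proof (rule ccontr)
    assume "occL \<pi> [1,2,4,3] \<noteq> {}"
    then obtain ix where "ix \<in> occL \<pi> [1,2,4,3]" by blast
    then obtain i1 i2 i3 i4 where "i1<i2" "i2<i3" "i3<i4" "i4 < length \<pi>"
      "same_order [\<pi>!i1,\<pi>!i2,\<pi>!i3,\<pi>!i4] [1,2,4,3]" by (auto simp: occL4)
    then show False using h unfolding cls_def same_order4 by auto
  qed
  moreover have "occL \<pi> [2,1,4,3] = {}"
  proof (rule ccontr)
    assume "occL \<pi> [2,1,4,3] \<noteq> {}"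
    then obtain ix where "ix \<in> occL \<pi> [2,1,4,3]" by blast
    then obtain i1 i2 i3 i4 where "i1<i2" "i2<i3" "i3<i4" "i4 < length \<pi>"
      "same_order [\<pi>!i1,\<pi>!i2,\<pi>!i3,\<pi>!i4] [2,1,4,3]" by (auto simp: occL4)
    then show False using h unfolding cls_def same_order4 by auto
  qed
  ultimately show "\<pi> \<in> Av_1243_2143" using h by (simp add: Av_1243_2143_def avoids_occL)
qed



definition occK :: "nat list \<Rightarrow> nat list \<Rightarrow> (nat list \<times> nat) set" where
  "occK \<pi> \<tau> = {(ix, j). ix \<in> occL \<pi> \<tau> \<and> j < length \<pi> \<and> (\<forall>i\<in>set ix. i < j \<and> \<pi>!i < \<pi>!j)}"

lemma same_order_snoc:
  assumes "length xs = length ys" "\<forall>y\<in>set ys. y < k"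
  shows "same_order (xs@[x]) (ys@[k]) \<longleftrightarrow> same_order xs ys \<and> (\<forall>z\<in>set xs. z < x)"
proof
  assume h: "same_order (xs@[x]) (ys@[k])"
  have "same_order xs ys"
    unfolding same_order_def
  proof (intro conjI allI impI)
    fix i j assume "i < length xs" "j < length xs"
    then show "(xs ! i < xs ! j) = (ys ! i < ys ! j)"
      using h assms unfolding same_order_def
      by (metis (no_types, lifting) length_append_singleton less_SucI nth_append)
  qed (use assms in auto)
  moreover have "\<forall>z\<in>set xs. z < x"
  proof
    fix z assume "z \<in> set xs"
    then obtain i where i: "i < length xs" "z = xs!i" by (auto simp: in_set_conv_nth)
    have "ys!i < k" using assms i by auto
    then show "z < x" using h i assms unfolding same_order_def
      by (metis length_append_singleton less_Suc_eq nth_append nth_append_length)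
  qed
  ultimately show "same_order xs ys \<and> (\<forall>z\<in>set xs. z < x)" by simp
next
  assume h: "same_order xs ys \<and> (\<forall>z\<in>set xs. z < x)"
  show "same_order (xs@[x]) (ys@[k])"
    unfolding same_order_def
  proof (intro conjI allI impI)
    show "length (xs @ [x]) = length (ys @ [k])" using assms by simp
    fix i j assume i: "i < length (xs@[x])" and j: "j < length (xs@[x])"
    consider "i < length xs" "j < length xs" | "i < length xs" "j = length xs"
      | "i = length xs" "j < length xs" | "i = length xs" "j = length xs"
      using i j by fastforce
    then show "((xs @ [x]) ! i < (xs @ [x]) ! j) = ((ys @ [k]) ! i < (ys @ [k]) ! j)"
    proof cases
      case 1 then show ?thesis using h assms by (simp add: nth_append same_order_def)
    next
      case 2 then show ?thesis using h assms by (simp add: nth_append)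
    next
      case 3
      have "xs!j < x" using h 3 by auto
      moreover have "ys!j < k" using assms(2) 3 assms(1) by (metis nth_mem)
      moreover have "(xs@[x])!i = x" "(ys@[k])!i = k" "(xs@[x])!j = xs!j" "(ys@[k])!j = ys!j"
        using 3 assms(1) by (auto simp: nth_append)
      ultimately show ?thesis by simp
    next
      case 4 then show ?thesis using assms by (simp add: nth_append)
    qed
  qed
qed

lemma perm_less: "is_perm \<tau> \<Longrightarrow> \<forall>y\<in>set \<tau>. y < length \<tau> + 1"
  by (auto simp: is_perm_def)

lemma occL_snoc:
  assumes "is_perm \<tau>"
  shows "ix \<in> occL \<pi> (\<tau> @ [length \<tau> + 1]) \<longleftrightarrow> (\<exists>ix' j. ix = ix'@[j] \<and> (ix',j) \<in> occK \<pi> \<tau>)"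
proof
  assume h: "ix \<in> occL \<pi> (\<tau> @ [length \<tau> + 1])"
  then have "length ix = length \<tau> + 1" by (simp add: occL_def)
  then obtain ix' j where ix: "ix = ix' @ [j]"
    by (metis add_diff_cancel_right' append_butlast_last_id length_0_conv nat.distinct(1) Suc_eq_plus1)
  from h have h1: "sorted_wrt (<) (ix'@[j])" "length ix' = length \<tau>" "\<forall>i\<in>set (ix'@[j]). i < length \<pi>"
     "same_order (map ((!) \<pi>) ix' @ [\<pi>!j]) (\<tau> @ [length \<tau> + 1])"
    unfolding ix occL_def by auto
  have so: "same_order (map ((!) \<pi>) ix') \<tau> \<and> (\<forall>z\<in>set (map ((!) \<pi>) ix'). z < \<pi>!j)"
    using same_order_snoc[OF _ perm_less[OF assms], of "map ((!) \<pi>) ix'" "\<pi>!j"] h1(2,4) by simp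
  have "(ix', j) \<in> occK \<pi> \<tau>"
    using h1 so unfolding occK_def occL_def by (auto simp: sorted_wrt_append)
  then show "\<exists>ix' j. ix = ix'@[j] \<and> (ix',j) \<in> occK \<pi> \<tau>" using ix by blast
next
  assume "\<exists>ix' j. ix = ix'@[j] \<and> (ix',j) \<in> occK \<pi> \<tau>"
  then obtain ix' j where ix: "ix = ix'@[j]" "(ix',j) \<in> occK \<pi> \<tau>" by blast
  then have h1: "sorted_wrt (<) ix'" "length ix' = length \<tau>" "\<forall>i\<in>set ix'. i < length \<pi>"
     "same_order (map ((!) \<pi>) ix') \<tau>" "j < length \<pi>" "\<forall>i\<in>set ix'. i < j \<and> \<pi>!i < \<pi>!j"
    unfolding occK_def occL_def by auto
  have so: "same_order (map ((!) \<pi>) ix' @ [\<pi>!j]) (\<tau> @ [length \<tau> + 1])"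
    using same_order_snoc[OF _ perm_less[OF assms], of "map ((!) \<pi>) ix'" "\<pi>!j"] h1 by simp
  show "ix \<in> occL \<pi> (\<tau> @ [length \<tau> + 1])"
    unfolding occL_def ix using h1 so by (simp add: sorted_wrt_append)
qed

lemma occL_snoc_eq: assumes "is_perm \<tau>" shows "occL \<pi> (\<tau> @ [length \<tau> + 1]) = (\<lambda>(ix,j). ix@[j]) ` occK \<pi> \<tau>"
proof (intro set_eqI iffI)
  fix ix assume "ix \<in> occL \<pi> (\<tau> @ [length \<tau> + 1])"
  then obtain ix' j where e: "ix = ix'@[j]" "(ix',j) \<in> occK \<pi> \<tau>" using occL_snoc[OF assms] by blast
  have "ix = (\<lambda>(ix,j). ix@[j]) (ix',j)" using e by simp
  then show "ix \<in> (\<lambda>(ix,j). ix@[j]) ` occK \<pi> \<tau>" using e(2) by (rule image_eqI)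
next
  fix ix assume "ix \<in> (\<lambda>(ix,j). ix@[j]) ` occK \<pi> \<tau>"
  then obtain pr where pr: "pr \<in> occK \<pi> \<tau>" "ix = (\<lambda>(ix,j). ix@[j]) pr" by (rule imageE) simp
  obtain ix' j where "pr = (ix', j)" by (cases pr)
  then have e: "ix = ix'@[j]" "(ix',j) \<in> occK \<pi> \<tau>" using pr by auto
  then show "ix \<in> occL \<pi> (\<tau> @ [length \<tau> + 1])" using occL_snoc[OF assms] by blast
qed

lemma card_occK: assumes "is_perm \<tau>" shows "card (occurrences \<pi> (\<tau> @ [length \<tau> + 1])) = card (occK \<pi> \<tau>)"
proof -
  have "card (occurrences \<pi> (\<tau> @ [length \<tau> + 1])) = card (occL \<pi> (\<tau> @ [length \<tau> + 1]))"
    by (rule card_occurrences)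
  also have "\<dots> = card ((\<lambda>(ix,j). ix@[j]) ` occK \<pi> \<tau>)" by (simp only: occL_snoc_eq[OF assms])
  also have "\<dots> = card (occK \<pi> \<tau>)" by (rule card_image) (auto simp: inj_on_def)
  finally show ?thesis .
qed

lemma avoids_occK: assumes "is_perm \<tau>" shows "avoids \<pi> (\<tau> @ [length \<tau> + 1]) \<longleftrightarrow> occK \<pi> \<tau> = {}"
proof -
  have "avoids \<pi> (\<tau> @ [length \<tau> + 1]) \<longleftrightarrow> occL \<pi> (\<tau> @ [length \<tau> + 1]) = {}" by (rule avoids_occL)
  also have "\<dots> \<longleftrightarrow> (\<lambda>(ix,j). ix@[j]) ` occK \<pi> \<tau> = {}" by (simp only: occL_snoc_eq[OF assms])
  finally show ?thesis by simp
qed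

definition emb :: "(nat \<Rightarrow> nat) \<Rightarrow> nat list \<Rightarrow> nat list \<Rightarrow> bool" where
  "emb e \<rho> \<pi> \<longleftrightarrow> (\<forall>i<length \<rho>. e i < length \<pi>) \<and> (\<forall>i j. i < j \<longrightarrow> j < length \<rho> \<longrightarrow> e i < e j) \<and>
     (\<forall>i<length \<rho>. \<forall>j<length \<rho>. (\<rho>!i < \<rho>!j) = (\<pi>!(e i) < \<pi>!(e j)))"

lemma emb_less_iff: "emb e \<rho> \<pi> \<Longrightarrow> i < length \<rho> \<Longrightarrow> j < length \<rho> \<Longrightarrow> (e i < e j) = (i < j)"
  unfolding emb_def by (metis linorder_neqE_nat order_less_asym)

lemma emb_eq_iff: "emb e \<rho> \<pi> \<Longrightarrow> i < length \<rho> \<Longrightarrow> j < length \<rho> \<Longrightarrow> (e i = e j) = (i = j)"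
  unfolding emb_def by (metis linorder_neqE_nat order_less_irrefl)

lemma emb_occL:
  assumes e: "emb e \<rho> \<pi>" and js: "\<forall>i\<in>set js. i < length \<rho>"
  shows "(map e js \<in> occL \<pi> p) = (js \<in> occL \<rho> p)"
proof -
  have s: "sorted_wrt (<) (map e js) = sorted_wrt (<) js"
    unfolding sorted_wrt_iff_nth_less using js emb_less_iff[OF e] by auto
  have b: "(\<forall>i\<in>set (map e js). i < length \<pi>)" using e js by (auto simp: emb_def)
  have o: "same_order (map ((!) \<pi>) (map e js)) p = same_order (map ((!) \<rho>) js) p"
    using e js unfolding same_order_def emb_def by auto
  show ?thesis unfolding occL_def using s b js o by auto
qed

lemma emb_occL_ex:
  assumes e: "emb e \<rho> \<pi>" and ix: "ix \<in> occL \<pi> p" and s: "set ix \<subseteq> e ` {..<length \<rho>}"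
  shows "\<exists>js. ix = map e js \<and> (\<forall>i\<in>set js. i < length \<rho>) \<and> js \<in> occL \<rho> p"
proof -
  define js where "js = map (inv_into {..<length \<rho>} e) ix"
  have 1: "ix = map e js" unfolding js_def map_map
  proof (rule sym, rule map_idI)
    fix x assume "x \<in> set ix"
    then have "x \<in> e ` {..<length \<rho>}" using s by blast
    then show "(e \<circ> inv_into {..<length \<rho>} e) x = x" by (simp add: f_inv_into_f)
  qed
  have 2: "\<forall>i\<in>set js. i < length \<rho>"
  proof
    fix i assume "i \<in> set js"
    then obtain x where "x \<in> set ix" "i = inv_into {..<length \<rho>} e x" unfolding js_def by auto
    then have "x \<in> e ` {..<length \<rho>}" "i = inv_into {..<length \<rho>} e x" using s by blast+
    then show "i < length \<rho>" using inv_into_into[of x e "{..<length \<rho>}"] by simp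
  qed
  show ?thesis using 1 2 emb_occL[OF e 2] ix by auto
qed

lemma emb_occK:
  assumes e: "emb e \<rho> \<pi>" and js: "\<forall>i\<in>set js. i < length \<rho>" and j: "j < length \<rho>"
  shows "((map e js, e j) \<in> occK \<pi> \<tau>) = ((js, j) \<in> occK \<rho> \<tau>)"
  using emb_occL[OF e js] e js j emb_less_iff[OF e] unfolding occK_def emb_def by auto

lemma emb_occK_ex:
  assumes e: "emb e \<rho> \<pi>" and h: "(ix, j) \<in> occK \<pi> \<tau>" and s: "set ix \<subseteq> e ` {..<length \<rho>}"
    and j: "j \<in> e ` {..<length \<rho>}"
  shows "\<exists>js j'. ix = map e js \<and> j = e j' \<and> (js, j') \<in> occK \<rho> \<tau>"
proof -
  have "ix \<in> occL \<pi> \<tau>" using h by (simp add: occK_def)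
  then obtain js where js: "ix = map e js" "\<forall>i\<in>set js. i < length \<rho>" "js \<in> occL \<rho> \<tau>"
    using emb_occL_ex[OF e _ s] by blast
  obtain j' where j': "j' < length \<rho>" "j = e j'" using j by auto
  show ?thesis using emb_occK[OF e js(2) j'(1)] h js j' by auto
qed

lemma emb_cls: assumes e: "emb e \<rho> \<pi>" and c: "cls \<pi>" shows "cls \<rho>"
  unfolding cls_def
proof
  assume "\<exists>i1 i2 i3 i4. i1 < i2 \<and> i2 < i3 \<and> i3 < i4 \<and> i4 < length \<rho> \<and>
      \<rho>!i1 < \<rho>!i4 \<and> \<rho>!i2 < \<rho>!i4 \<and> \<rho>!i4 < \<rho>!i3"
  then obtain i1 i2 i3 i4 where q: "i1 < i2" "i2 < i3" "i3 < i4" "i4 < length \<rho>"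
      "\<rho>!i1 < \<rho>!i4" "\<rho>!i2 < \<rho>!i4" "\<rho>!i4 < \<rho>!i3" by blast
  have "e i1 < e i2" "e i2 < e i3" "e i3 < e i4" "e i4 < length \<pi>" using e q by (auto simp: emb_def)
  moreover have "\<pi>!(e i1) < \<pi>!(e i4)" "\<pi>!(e i2) < \<pi>!(e i4)" "\<pi>!(e i4) < \<pi>!(e i3)"
    using e q by (auto simp: emb_def)
  ultimately show False using c unfolding cls_def by blast
qed

lemma emb_cls_ex:
  assumes e: "emb e \<rho> \<pi>" and c: "cls \<rho>"
    and q: "i1 < i2" "i2 < i3" "i3 < i4" "\<pi>!i1 < \<pi>!i4" "\<pi>!i2 < \<pi>!i4" "\<pi>!i4 < \<pi>!i3"
    and r: "i1 \<in> e ` {..<length \<rho>}" "i2 \<in> e ` {..<length \<rho>}" "i3 \<in> e ` {..<length \<rho>}" "i4 \<in> e ` {..<length \<rho>}"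
  shows False
proof -
  obtain j1 j2 j3 j4 where j: "j1 < length \<rho>" "j2 < length \<rho>" "j3 < length \<rho>" "j4 < length \<rho>"
    "i1 = e j1" "i2 = e j2" "i3 = e j3" "i4 = e j4" using r by blast
  have "j1 < j2" "j2 < j3" "j3 < j4" using q j emb_less_iff[OF e] by auto
  moreover have "\<rho>!j1 < \<rho>!j4" "\<rho>!j2 < \<rho>!j4" "\<rho>!j4 < \<rho>!j3" using q j e by (auto simp: emb_def)
  ultimately show False using c j unfolding cls_def by blast
qed



definition gv :: "nat \<Rightarrow> nat \<Rightarrow> nat \<Rightarrow> nat" where "gv q b v = (if v = 1 then q else v + b)"

definition glue :: "nat list \<Rightarrow> nat list \<Rightarrow> nat list \<Rightarrow> nat list" where
  "glue \<sigma> \<rho>1 \<rho>2 = (let a = length \<rho>1 - 1; b = length \<rho>2 - 1; c = length \<sigma>; q = hd \<rho>2 in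
    map (\<lambda>i. if i \<le> a then (if \<rho>1!i = 1 then gv q b (\<sigma>!0) else \<rho>1!i + c + b)
             else if i < a + c then gv q b (\<sigma>!(i-a))
             else if i = a + c then c + b + 1 else \<rho>2!(i - (a+c))) [0..<a+b+c+1])"

lemma perm_nth_range: "is_perm xs \<Longrightarrow> i < length xs \<Longrightarrow> 1 \<le> xs!i \<and> xs!i \<le> length xs"
  unfolding is_perm_def by (metis atLeastAtMost_iff nth_mem)

lemma perm_has: "is_perm xs \<Longrightarrow> 1 \<le> v \<Longrightarrow> v \<le> length xs \<Longrightarrow> \<exists>i<length xs. xs!i = v"
  unfolding is_perm_def by (metis atLeastAtMost_iff in_set_conv_nth)

lemma perm_inj: "is_perm xs \<Longrightarrow> i < length xs \<Longrightarrow> j < length xs \<Longrightarrow> xs!i = xs!j \<Longrightarrow> i = j"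
  unfolding is_perm_def by (simp add: nth_eq_iff_index_eq)

locale gl =
  fixes \<sigma> \<rho>1 \<rho>2 :: "nat list"
  assumes p\<sigma>: "is_perm \<sigma>" and p1: "is_perm \<rho>1" and p2: "is_perm \<rho>2"
  and n\<sigma>: "\<sigma> \<noteq> []" and n1: "\<rho>1 \<noteq> []" and n2: "\<rho>2 \<noteq> []"
begin

definition "aa = length \<rho>1 - 1"
definition "bb = length \<rho>2 - 1"
definition "cc = length \<sigma>"
definition "qq = hd \<rho>2"
definition "p = (THE i. i < length \<rho>1 \<and> \<rho>1!i = 1)"
definition "m = (THE j. j < length \<sigma> \<and> \<sigma>!j = 1)"
definition "eS j = (if j = 0 then p else aa + j)"
definition "e2 j = (if j = 0 then eS m else aa + cc + j)"
abbreviation "\<pi> \<equiv> glue \<sigma> \<rho>1 \<rho>2"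

lemma l1: "length \<rho>1 = aa + 1" using n1 by (simp add: aa_def)
lemma l2: "length \<rho>2 = bb + 1" using n2 by (simp add: bb_def)
lemma lS: "length \<sigma> = cc" by (simp add: cc_def)
lemma cpos: "cc \<ge> 1" using n\<sigma> by (simp add: cc_def Suc_le_eq)

lemma p_prop: "p \<le> aa" "\<rho>1!p = 1"
proof -
  obtain i where i: "i < length \<rho>1" "\<rho>1!i = 1" using perm_has[OF p1, of 1] n1 by (auto simp: Suc_le_eq)
  have "p = i" unfolding p_def
    by (rule the_equality) (use i perm_inj[OF p1] in auto)
  then show "p \<le> aa" "\<rho>1!p = 1" using i l1 by auto
qed

lemma p_uniq: "i \<le> aa \<Longrightarrow> \<rho>1!i = 1 \<Longrightarrow> i = p"
  using perm_inj[OF p1, of i p] p_prop l1 by auto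

lemma m_prop: "m < cc" "\<sigma>!m = 1"
proof -
  obtain i where i: "i < length \<sigma>" "\<sigma>!i = 1" using perm_has[OF p\<sigma>, of 1] n\<sigma> by (auto simp: Suc_le_eq)
  have "m = i" unfolding m_def
    by (rule the_equality) (use i perm_inj[OF p\<sigma>] in auto)
  then show "m < cc" "\<sigma>!m = 1" using i lS by auto
qed

lemma m_uniq: "j < cc \<Longrightarrow> \<sigma>!j = 1 \<Longrightarrow> j = m"
  using perm_inj[OF p\<sigma>, of j m] m_prop lS by auto

lemma len: "length \<pi> = aa + bb + cc + 1"
  by (simp add: glue_def Let_def aa_def bb_def cc_def)

lemma nth_gen: "i < aa + bb + cc + 1 \<Longrightarrow> \<pi>!i = (if i \<le> aa then (if \<rho>1!i = 1 then gv qq bb (\<sigma>!0) else \<rho>1!i + cc + bb)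
             else if i < aa + cc then gv qq bb (\<sigma>!(i-aa))
             else if i = aa + cc then cc + bb + 1 else \<rho>2!(i - (aa+cc)))"
  unfolding glue_def Let_def aa_def[symmetric] bb_def[symmetric] cc_def[symmetric] qq_def[symmetric]
  by (simp del: upt_Suc)

lemma nthN: "i \<le> aa \<Longrightarrow> i \<noteq> p \<Longrightarrow> \<pi>!i = \<rho>1!i + cc + bb"
  using nth_gen[of i] p_uniq by auto

lemma eS_less: "j < cc \<Longrightarrow> eS j < aa + cc"
  using p_prop cpos by (auto simp: eS_def)

lemma nthS: "j < cc \<Longrightarrow> \<pi>!(eS j) = gv qq bb (\<sigma>!j)"
  using nth_gen[of "eS j"] p_prop eS_less[of j] by (auto simp: eS_def)

lemma nthT: "\<pi>!(aa+cc) = cc+bb+1"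
  using nth_gen[of "aa+cc"] cpos by auto

lemma nthE: "aa + cc < i \<Longrightarrow> i < aa+bb+cc+1 \<Longrightarrow> \<pi>!i = \<rho>2!(i-(aa+cc))"
  using nth_gen[of i] by auto

lemma qq_eq: "qq = \<rho>2!0" using n2 by (simp add: qq_def hd_conv_nth)
lemma qq_range: "1 \<le> qq" "qq \<le> bb + 1"
  using perm_nth_range[OF p2, of 0] l2 qq_eq by auto

lemma gv_range: "j < cc \<Longrightarrow> 1 \<le> gv qq bb (\<sigma>!j) \<and> gv qq bb (\<sigma>!j) \<le> bb + cc"
  using perm_nth_range[OF p\<sigma>, of j] qq_range lS by (auto simp: gv_def)

lemma gv_high: "j < cc \<Longrightarrow> j \<noteq> m \<Longrightarrow> bb + 2 \<le> gv qq bb (\<sigma>!j)"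
  using perm_nth_range[OF p\<sigma>, of j] m_uniq lS by (auto simp: gv_def)

lemma valN: "i \<le> aa \<Longrightarrow> i \<noteq> p \<Longrightarrow> cc + bb + 2 \<le> \<pi>!i \<and> \<pi>!i \<le> aa + bb + cc + 1"
proof -
  assume a: "i \<le> aa" "i \<noteq> p"
  have "\<rho>1!i \<noteq> 1" using a p_uniq by auto
  then show ?thesis using perm_nth_range[OF p1, of i] a l1 nthN[OF a] by auto
qed

lemma valS: "j < cc \<Longrightarrow> 1 \<le> \<pi>!(eS j) \<and> \<pi>!(eS j) \<le> bb + cc"
  using nthS gv_range by auto

lemma valSm: "\<pi>!(eS m) = qq"
  using nthS[OF m_prop(1)] m_prop by (simp add: gv_def)

lemma valShigh: "j < cc \<Longrightarrow> j \<noteq> m \<Longrightarrow> bb + 2 \<le> \<pi>!(eS j)"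
  using nthS gv_high by auto

lemma valE: "aa + cc < i \<Longrightarrow> i < aa+bb+cc+1 \<Longrightarrow> 1 \<le> \<pi>!i \<and> \<pi>!i \<le> bb + 1 \<and> \<pi>!i \<noteq> qq"
proof -
  assume a: "aa + cc < i" "i < aa+bb+cc+1"
  have r: "1 \<le> \<rho>2!(i-(aa+cc)) \<and> \<rho>2!(i-(aa+cc)) \<le> bb + 1"
    using perm_nth_range[OF p2, of "i-(aa+cc)"] a l2 by auto
  have "i-(aa+cc) < length \<rho>2" using a l2 by linarith
  then have "\<rho>2!(i-(aa+cc)) \<noteq> \<rho>2!0" using perm_inj[OF p2, of "i-(aa+cc)" 0] a l2 by auto
  then show ?thesis using r nthE[OF a] qq_eq by auto
qed

lemma eS_mono: "i < j \<Longrightarrow> j < cc \<Longrightarrow> eS i < eS j"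
  using p_prop by (auto simp: eS_def)

lemma inS_iff: "i \<in> eS ` {..<cc} \<longleftrightarrow> (i = p \<or> (aa < i \<and> i < aa + cc))"
proof
  assume "i \<in> eS ` {..<cc}"
  then show "i = p \<or> (aa < i \<and> i < aa + cc)" using cpos by (auto simp: eS_def split: if_splits)
next
  assume h: "i = p \<or> (aa < i \<and> i < aa + cc)"
  show "i \<in> eS ` {..<cc}"
  proof (cases "i = p")
    case True then show ?thesis using cpos by (auto simp: eS_def image_iff intro!: bexI[of _ 0])
  next
    case False
    then have "aa < i" "i < aa + cc" using h by auto
    then show ?thesis by (auto simp: eS_def image_iff intro!: bexI[of _ "i - aa"])
  qed
qed

lemma region: "i < aa+bb+cc+1 \<Longrightarrow> (i \<le> aa \<and> i \<noteq> p) \<or> i \<in> eS ` {..<cc} \<or> i = aa + cc \<or> aa + cc < i"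
  using inS_iff by auto

lemma valS': "i \<in> eS ` {..<cc} \<Longrightarrow> \<pi>!i \<le> bb + cc"
  using valS by auto

lemma lowval: "i < aa+bb+cc+1 \<Longrightarrow> \<pi>!i \<le> bb + 1 \<Longrightarrow> i = eS m \<or> aa + cc < i"
proof -
  assume a: "i < aa+bb+cc+1" "\<pi>!i \<le> bb + 1"
  consider "i \<le> aa \<and> i \<noteq> p" | "i \<in> eS ` {..<cc}" | "i = aa + cc" | "aa + cc < i"
    using region[OF a(1)] by blast
  then show ?thesis
  proof cases
    case 1 then show ?thesis using valN[of i] a by auto
  next
    case 2
    then obtain j where j: "j < cc" "i = eS j" by auto
    then have "j = m" using valShigh[of j] a by (cases "j = m") auto
    then show ?thesis using j by simp
  next
    case 3 then show ?thesis using nthT a cpos by auto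
  qed simp
qed

lemma midval: "i < aa+bb+cc+1 \<Longrightarrow> \<pi>!i \<le> bb + cc \<Longrightarrow> i \<in> eS ` {..<cc} \<or> aa + cc < i"
proof -
  assume a: "i < aa+bb+cc+1" "\<pi>!i \<le> bb + cc"
  consider "i \<le> aa \<and> i \<noteq> p" | "i \<in> eS ` {..<cc}" | "i = aa + cc" | "aa + cc < i"
    using region[OF a(1)] by blast
  then show ?thesis
  proof cases
    case 1 then show ?thesis using valN[of i] a by auto
  next
    case 3 then show ?thesis using nthT a cpos by auto
  qed simp_all
qed

lemma highpos: "aa < i \<Longrightarrow> i < aa+bb+cc+1 \<Longrightarrow> \<pi>!i \<le> cc + bb + 1"
proof -
  assume a: "aa < i" "i < aa+bb+cc+1"
  consider "i \<in> eS ` {..<cc}" | "i = aa + cc" | "aa + cc < i"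
    using region[OF a(2)] a(1) by auto
  then show ?thesis
  proof cases
    case 1 then show ?thesis using valS' by fastforce
  next
    case 2 then show ?thesis using nthT by simp
  next
    case 3 then show ?thesis using valE[OF 3 a(2)] by simp
  qed
qed

end



context gl begin

lemma gv_less_iff: "v < cc + 1 \<Longrightarrow> w < cc + 1 \<Longrightarrow> 1 \<le> v \<Longrightarrow> 1 \<le> w \<Longrightarrow> (gv qq bb v < gv qq bb w) = (v < w)"
  using qq_range by (auto simp: gv_def)

lemma gv_inj: "1 \<le> v \<Longrightarrow> 1 \<le> w \<Longrightarrow> gv qq bb v = gv qq bb w \<Longrightarrow> v = w"
  using qq_range by (auto simp: gv_def split: if_splits)

lemma inj_pi: assumes i: "i < aa+bb+cc+1" and j: "j < aa+bb+cc+1" and e: "\<pi>!i = \<pi>!j" shows "i = j"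
proof -
  consider "i \<le> aa \<and> i \<noteq> p" | "i \<in> eS ` {..<cc}" | "i = aa + cc" | "aa + cc < i"
    using region[OF i] by blast
  then show ?thesis
  proof cases
    case 1
    then have v: "cc + bb + 2 \<le> \<pi>!j" using valN[of i] e by auto
    have jN: "j \<le> aa \<and> j \<noteq> p"
    proof (rule ccontr)
      assume "\<not> (j \<le> aa \<and> j \<noteq> p)"
      then have "aa < j \<or> j = p" by auto
      then show False
      proof
        assume "aa < j" then show False using highpos[OF _ j] v by auto
      next
        assume "j = p" then show False using valS[of 0] cpos v by (auto simp: eS_def)
      qed
    qed
    have "\<rho>1!i = \<rho>1!j" using nthN[of i] nthN[of j] 1 jN e by auto
    then show ?thesis using perm_inj[OF p1, of i j] 1 jN l1 by auto
  next
    case 2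
    then obtain j1 where j1: "j1 < cc" "i = eS j1" by auto
    have "\<pi>!j \<le> bb + cc" using valS[OF j1(1)] j1 e by auto
    then consider "j \<in> eS ` {..<cc}" | "aa + cc < j" using midval[OF j] by blast
    then show ?thesis
    proof cases
      case 1
      then obtain j2 where j2: "j2 < cc" "j = eS j2" by auto
      have "\<sigma>!j1 = \<sigma>!j2" using nthS[OF j1(1)] nthS[OF j2(1)] e j1 j2
          perm_nth_range[OF p\<sigma>, of j1] perm_nth_range[OF p\<sigma>, of j2] lS gv_inj by auto
      then show ?thesis using perm_inj[OF p\<sigma>, of j1 j2] j1 j2 lS by auto
    next
      case 2
      have "\<pi>!i \<le> bb + 1" using valE[OF 2 j] e by auto
      then have "i = eS m" using lowval[OF i] j1 eS_less by fastforce
      then show ?thesis using valSm valE[OF 2 j] e by auto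
    qed
  next
    case 3
    consider "j \<le> aa \<and> j \<noteq> p" | "j \<in> eS ` {..<cc}" | "j = aa + cc" | "aa + cc < j"
      using region[OF j] by blast
    then show ?thesis
    proof cases
      case 1 then show ?thesis using valN[of j] e 3 nthT by auto
    next
      case 2 then show ?thesis using valS' e 3 nthT by fastforce
    next
      case 4 then show ?thesis using valE[OF 4 j] e 3 nthT cpos by auto
    qed (use 3 in simp)
  next
    case 4
    have "\<pi>!j \<le> bb + 1" using valE[OF 4 i] e by auto
    then consider "j = eS m" | "aa + cc < j" using lowval[OF j] by blast
    then show ?thesis
    proof cases
      case 1 then show ?thesis using valSm valE[OF 4 i] e by auto
    next
      case 2
      have "\<rho>2!(i-(aa+cc)) = \<rho>2!(j-(aa+cc))" using nthE[OF 4 i] nthE[OF 2 j] e by auto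
      moreover have "i-(aa+cc) < length \<rho>2" "j-(aa+cc) < length \<rho>2" using i j l2 by linarith+
      ultimately have "i-(aa+cc) = j-(aa+cc)" using perm_inj[OF p2] by blast
      then show ?thesis using 4 2 by linarith
    qed
  qed
qed

lemma val_range: assumes i: "i < aa+bb+cc+1" shows "1 \<le> \<pi>!i \<and> \<pi>!i \<le> aa+bb+cc+1"
proof -
  consider "i \<le> aa \<and> i \<noteq> p" | "i \<in> eS ` {..<cc}" | "i = aa + cc" | "aa + cc < i"
    using region[OF i] by blast
  then show ?thesis
  proof cases
    case 1 then show ?thesis using valN[of i] by auto
  next
    case 2 then show ?thesis using valS by fastforce
  next
    case 3 then show ?thesis using nthT by simp
  next
    case 4 then show ?thesis using valE[OF 4 i] by auto
  qed
qed

lemma perm_pi: "is_perm \<pi>"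
proof -
  have d: "distinct \<pi>" unfolding distinct_conv_nth len using inj_pi by blast
  have s: "set \<pi> \<subseteq> {1..length \<pi>}" using val_range len by (auto simp: in_set_conv_nth)
  have "card (set \<pi>) = length \<pi>" using d by (simp add: distinct_card)
  then have "set \<pi> = {1..length \<pi>}" using s by (intro card_subset_eq) auto
  then show ?thesis using d by (simp add: is_perm_def)
qed

lemma emb1: "emb id \<rho>1 \<pi>"
  unfolding emb_def
proof (intro conjI allI impI)
  fix i assume "i < length \<rho>1" then show "id i < length \<pi>" using l1 len by simp
next
  fix i j :: nat assume "i < j" then show "id i < id j" by simp
next
  fix i j assume i: "i < length \<rho>1" and j: "j < length \<rho>1"
  have vp: "\<pi>!p \<le> bb + cc" using valS[of 0] cpos by (simp add: eS_def)
  have r: "\<And>k. k < length \<rho>1 \<Longrightarrow> k \<noteq> p \<Longrightarrow> 2 \<le> \<rho>1!k"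
    using perm_nth_range[OF p1] p_uniq l1 by (metis Suc_eq_plus1 add_leD1 le_antisym less_Suc_eq_le not_less_eq_eq one_add_one)
  show "(\<rho>1!i < \<rho>1!j) = (\<pi>!(id i) < \<pi>!(id j))"
  proof (cases "i = p"; cases "j = p")
    assume "i = p" "j = p" then show ?thesis by simp
  next
    assume a: "i = p" "j \<noteq> p"
    then show ?thesis using r[OF j] p_prop valN[of j] j l1 vp by auto
  next
    assume a: "i \<noteq> p" "j = p"
    then show ?thesis using r[OF i] p_prop valN[of i] i l1 vp by auto
  next
    assume a: "i \<noteq> p" "j \<noteq> p"
    then show ?thesis using nthN[of i] nthN[of j] i j l1 by auto
  qed
qed

lemma embS: "emb eS \<sigma> \<pi>"
  unfolding emb_def
proof (intro conjI allI impI)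
  fix i assume "i < length \<sigma>" then show "eS i < length \<pi>" using eS_less lS len by fastforce
next
  fix i j :: nat assume "i < j" "j < length \<sigma>" then show "eS i < eS j" using eS_mono lS by auto
next
  fix i j assume i: "i < length \<sigma>" and j: "j < length \<sigma>"
  show "(\<sigma>!i < \<sigma>!j) = (\<pi>!(eS i) < \<pi>!(eS j))"
    using nthS i j lS gv_less_iff perm_nth_range[OF p\<sigma>, of i] perm_nth_range[OF p\<sigma>, of j] by auto
qed

lemma nth_e2: "j < bb + 1 \<Longrightarrow> \<pi>!(e2 j) = \<rho>2!j"
  using valSm qq_eq nthE[of "aa+cc+j"] by (auto simp: e2_def)

lemma e2_less: "j < bb + 1 \<Longrightarrow> e2 j < aa+bb+cc+1"
  using eS_less[OF m_prop(1)] by (auto simp: e2_def)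

lemma emb2: "emb e2 \<rho>2 \<pi>"
  unfolding emb_def
proof (intro conjI allI impI)
  fix i assume "i < length \<rho>2" then show "e2 i < length \<pi>" using e2_less l2 len by auto
next
  fix i j :: nat assume "i < j" "j < length \<rho>2" then show "e2 i < e2 j"
    using eS_less[OF m_prop(1)] by (auto simp: e2_def)
next
  fix i j assume i: "i < length \<rho>2" and j: "j < length \<rho>2"
  show "(\<rho>2!i < \<rho>2!j) = (\<pi>!(e2 i) < \<pi>!(e2 j))" using nth_e2 i j l2 by auto
qed

lemma range1: "i \<le> aa \<Longrightarrow> i \<in> id ` {..<length \<rho>1}" using l1 by auto
lemma rangeS: "i \<in> eS ` {..<cc} \<Longrightarrow> i \<in> eS ` {..<length \<sigma>}" using lS by simp
lemma range2: "i < aa+bb+cc+1 \<Longrightarrow> i = eS m \<or> aa + cc < i \<Longrightarrow> i \<in> e2 ` {..<length \<rho>2}"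
proof -
  assume i: "i < aa+bb+cc+1" and h: "i = eS m \<or> aa + cc < i"
  from h show ?thesis
  proof
    assume "i = eS m" then show ?thesis using l2 by (auto simp: e2_def image_iff intro!: bexI[of _ 0])
  next
    assume a: "aa + cc < i"
    then have "i = e2 (i - (aa+cc))" "i - (aa+cc) < length \<rho>2" using i l2 by (auto simp: e2_def)
    then show ?thesis by blast
  qed
qed

end


context gl begin

lemma cls_pi: assumes cS: "cls \<sigma>" and c1: "cls \<rho>1" and c2: "cls \<rho>2" shows "cls \<pi>"
  unfolding cls_def
proof
  assume "\<exists>i1 i2 i3 i4. i1 < i2 \<and> i2 < i3 \<and> i3 < i4 \<and> i4 < length \<pi> \<and>
      \<pi>!i1 < \<pi>!i4 \<and> \<pi>!i2 < \<pi>!i4 \<and> \<pi>!i4 < \<pi>!i3"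
  then obtain i1 i2 i3 i4 where q: "i1 < i2" "i2 < i3" "i3 < i4" "\<pi>!i1 < \<pi>!i4" "\<pi>!i2 < \<pi>!i4" "\<pi>!i4 < \<pi>!i3"
    and i4: "i4 < aa+bb+cc+1" using len by auto
  have i3: "i3 < aa+bb+cc+1" and i2: "i2 < aa+bb+cc+1" and i1: "i1 < aa+bb+cc+1" using q i4 by auto
  consider "i3 \<le> aa \<and> i3 \<noteq> p" | "i3 \<in> eS ` {..<cc}" | "i3 = aa + cc" | "aa + cc < i3"
    using region[OF i3] by blast
  then show False
  proof cases
    case 1
    show False
    proof (cases "i4 \<le> aa")
      case True
      then show False using emb_cls_ex[OF emb1 c1 q] range1 q by auto
    next
      case False
      then have v: "\<pi>!i4 \<le> cc + bb + 1" using highpos i4 by auto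
      have "i1 = p" using valN[of i1] q 1 v by (cases "i1 = p") auto
      moreover have "i2 = p" using valN[of i2] q 1 v by (cases "i2 = p") auto
      ultimately show False using q by simp
    qed
  next
    case 2
    then obtain j3 where j3: "j3 < cc" "i3 = eS j3" by auto
    have v3: "\<pi>!i4 \<le> bb + cc" using valS[OF j3(1)] j3 q by auto
    have lt: "i3 < aa + cc" using eS_less j3 by auto
    have s1: "i1 \<in> eS ` {..<cc}" using midval[OF i1] q v3 lt by fastforce
    have s2: "i2 \<in> eS ` {..<cc}" using midval[OF i2] q v3 lt by fastforce
    consider "i4 \<in> eS ` {..<cc}" | "aa + cc < i4" using midval[OF i4 v3] by blast
    then show False
    proof cases
      case 1
      then show False using emb_cls_ex[OF embS cS q] rangeS s1 s2 2 by blast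
    next
      case 2
      have "\<pi>!i4 \<le> bb + 1" using valE[OF 2 i4] by simp
      then have "i1 = eS m" "i2 = eS m" using lowval[OF i1] lowval[OF i2] q lt by auto
      then show False using q by simp
    qed
  next
    case 3
    then have "aa + cc < i4" using q by simp
    then have "\<pi>!i4 \<le> bb + 1" using valE i4 by blast
    then have "i1 = eS m" "i2 = eS m" using lowval[OF i1] lowval[OF i2] q 3 by auto
    then show False using q by simp
  next
    case 4
    then have "aa + cc < i4" using q by simp
    then have v: "\<pi>!i4 \<le> bb + 1" using valE i4 by blast
    have "i1 = eS m \<or> aa + cc < i1" using lowval[OF i1] q v by auto
    moreover have "i2 = eS m \<or> aa + cc < i2" using lowval[OF i2] q v by auto
    ultimately show False
      using emb_cls_ex[OF emb2 c2 q] range2[OF i1] range2[OF i2] range2[OF i3] range2[OF i4] 4 \<open>aa + cc < i4\<close>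
      by blast
  qed
qed

lemma cls_iff: "cls \<pi> \<longleftrightarrow> cls \<sigma> \<and> cls \<rho>1 \<and> cls \<rho>2"
  using cls_pi emb_cls[OF emb1] emb_cls[OF embS] emb_cls[OF emb2] by blast

lemma occK_cases:
  assumes h: "(ix, j) \<in> occK \<pi> \<tau>"
  shows "(\<exists>js. ix = map eS js \<and> j = aa + cc \<and> js \<in> occL \<sigma> \<tau>) \<or>
         (\<exists>js j'. ix = map eS js \<and> j = eS j' \<and> (js, j') \<in> occK \<sigma> \<tau>) \<or>
         (ix, j) \<in> occK \<rho>1 \<tau> \<or>
         (\<exists>js j'. ix = map e2 js \<and> j = e2 j' \<and> (js, j') \<in> occK \<rho>2 \<tau>)"
proof -
  have j: "j < aa+bb+cc+1" and ixo: "ix \<in> occL \<pi> \<tau>" and below: "\<forall>i\<in>set ix. i < j \<and> \<pi>!i < \<pi>!j"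
    using h len by (auto simp: occK_def)
  consider "j \<le> aa \<and> j \<noteq> p" | "j \<in> eS ` {..<cc}" | "j = aa + cc" | "aa + cc < j"
    using region[OF j] by blast
  then show ?thesis
  proof cases
    case 1
    have "set ix \<subseteq> id ` {..<length \<rho>1}" using below 1 range1 by force
    moreover have "j \<in> id ` {..<length \<rho>1}" using 1 range1 by blast
    ultimately obtain js j' where "ix = map id js" "j = id j'" "(js, j') \<in> occK \<rho>1 \<tau>"
      using emb_occK_ex[OF emb1 h] by blast
    then show ?thesis by simp
  next
    case 2
    then obtain j' where j': "j' < cc" "j = eS j'" by auto
    have lt: "j < aa + cc" using eS_less j' by auto
    have v: "\<pi>!j \<le> bb + cc" using valS[OF j'(1)] j' by auto
    have "set ix \<subseteq> eS ` {..<length \<sigma>}"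
    proof
      fix i assume i: "i \<in> set ix"
      then have "i < j" "\<pi>!i < \<pi>!j" using below by auto
      then show "i \<in> eS ` {..<length \<sigma>}" using midval[of i] lt v j lS by fastforce
    qed
    moreover have "j \<in> eS ` {..<length \<sigma>}" using j' lS by auto
    ultimately show ?thesis using emb_occK_ex[OF embS h] by blast
  next
    case 3
    have "set ix \<subseteq> eS ` {..<length \<sigma>}"
    proof
      fix i assume i: "i \<in> set ix"
      then have "i < j" "\<pi>!i < \<pi>!j" using below by auto
      then show "i \<in> eS ` {..<length \<sigma>}" using midval[of i] 3 nthT j lS by fastforce
    qed
    then obtain js where "ix = map eS js" "js \<in> occL \<sigma> \<tau>" using emb_occL_ex[OF embS ixo] by blast
    then show ?thesis using 3 by blast
  next
    case 4
    have v: "\<pi>!j \<le> bb + 1" using valE[OF 4 j] by simp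
    have "set ix \<subseteq> e2 ` {..<length \<rho>2}"
    proof
      fix i assume i: "i \<in> set ix"
      then have "i < j" "\<pi>!i < \<pi>!j" using below by auto
      then show "i \<in> e2 ` {..<length \<rho>2}" using lowval[of i] range2[of i] v j by auto
    qed
    moreover have "j \<in> e2 ` {..<length \<rho>2}" using range2[OF j] 4 by blast
    ultimately show ?thesis using emb_occK_ex[OF emb2 h] by blast
  qed
qed

lemma occK_A1: assumes "js \<in> occL \<sigma> \<tau>" shows "(map eS js, aa + cc) \<in> occK \<pi> \<tau>"
proof -
  have js: "\<forall>i\<in>set js. i < length \<sigma>" using assms by (auto simp: occL_def)
  have "map eS js \<in> occL \<pi> \<tau>" using emb_occL[OF embS js] assms by simp
  moreover have "\<forall>i\<in>set (map eS js). i < aa + cc \<and> \<pi>!i < \<pi>!(aa+cc)"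
    using js eS_less valS lS nthT by fastforce
  ultimately show ?thesis using len by (auto simp: occK_def)
qed

lemma occK_A2: assumes h: "(js, j) \<in> occK \<sigma> \<tau>" shows "(map eS js, eS j) \<in> occK \<pi> \<tau>"
proof -
  have js: "\<forall>i\<in>set js. i < length \<sigma>" "j < length \<sigma>" using h by (auto simp: occK_def occL_def)
  show ?thesis using emb_occK[OF embS js] h by simp
qed

lemma occK_A3: assumes h: "(ix, j) \<in> occK \<rho>1 \<tau>" shows "(ix, j) \<in> occK \<pi> \<tau>"
proof -
  have js: "\<forall>i\<in>set ix. i < length \<rho>1" "j < length \<rho>1" using h by (auto simp: occK_def occL_def)
  show ?thesis using emb_occK[OF emb1 js] h by simp
qed

lemma occK_A4: assumes h: "(js, j) \<in> occK \<rho>2 \<tau>" shows "(map e2 js, e2 j) \<in> occK \<pi> \<tau>"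
proof -
  have js: "\<forall>i\<in>set js. i < length \<rho>2" "j < length \<rho>2" using h by (auto simp: occK_def occL_def)
  show ?thesis using emb_occK[OF emb2 js] h by simp
qed

lemma occK_A2_pos: "(js, j) \<in> occK \<sigma> \<tau> \<Longrightarrow> eS j < aa + cc"
  using eS_less lS by (auto simp: occK_def)

lemma occK_A3_pos: "(ix, j) \<in> occK \<rho>1 \<tau> \<Longrightarrow> j < aa + cc"
  using l1 cpos by (auto simp: occK_def)

lemma occK_A4_pos: "(js, j) \<in> occK \<rho>2 \<tau> \<Longrightarrow> \<tau> \<noteq> [] \<Longrightarrow> aa + cc < e2 j"
proof -
  assume h: "(js, j) \<in> occK \<rho>2 \<tau>" "\<tau> \<noteq> []"
  then have "js \<noteq> []" by (auto simp: occK_def occL_def)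
  then obtain i where "i \<in> set js" by (cases js) auto
  then have "0 < j" using h by (auto simp: occK_def)
  then show ?thesis by (simp add: e2_def)
qed

lemma inj_map_eS: "\<forall>i\<in>set js. i < cc \<Longrightarrow> \<forall>i\<in>set js'. i < cc \<Longrightarrow> map eS js = map eS js' \<Longrightarrow> js = js'"
proof -
  assume a: "\<forall>i\<in>set js. i < cc" "\<forall>i\<in>set js'. i < cc" "map eS js = map eS js'"
  have "inj_on eS {..<cc}" using emb_eq_iff[OF embS] lS by (auto simp: inj_on_def)
  then have "inj_on eS (set js \<union> set js')" using a(1,2) by (auto intro: inj_on_subset)
  then show ?thesis using a(3) by (rule map_inj_on[rotated])
qed

end


lemma perm_of: "distinct xs \<Longrightarrow> \<forall>x\<in>set xs. 1 \<le> x \<and> x \<le> length xs \<Longrightarrow> is_perm xs"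
proof -
  assume d: "distinct xs" and r: "\<forall>x\<in>set xs. 1 \<le> x \<and> x \<le> length xs"
  have s: "set xs \<subseteq> {1..length xs}" using r by auto
  have "card (set xs) = length xs" using d by (simp add: distinct_card)
  then have "set xs = {1..length xs}" using s by (intro card_subset_eq) auto
  then show ?thesis using d by (simp add: is_perm_def)
qed

lemma perm_count:
  assumes p: "is_perm \<pi>" and x: "x \<le> length \<pi> + 1"
  shows "card {i. i < length \<pi> \<and> \<pi>!i < x} = x - 1"
proof -
  have inj: "inj_on ((!) \<pi>) {i. i < length \<pi> \<and> \<pi>!i < x}"
    using perm_inj[OF p] by (auto simp: inj_on_def)
  have "(!) \<pi> ` {i. i < length \<pi> \<and> \<pi>!i < x} = {y \<in> set \<pi>. y < x}"
    by (auto simp: in_set_conv_nth)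
  also have "\<dots> = {1..<x}" using p x unfolding is_perm_def by auto
  finally show ?thesis using card_image[OF inj] by simp
qed

lemma two_elems:
  fixes X :: "nat set"
  assumes "finite X" "2 \<le> card X"
  shows "\<exists>s s'. s \<in> X \<and> s' \<in> X \<and> s < s'"
proof -
  obtain x where x: "x \<in> X" using assms by fastforce
  have "card (X - {x}) \<ge> 1" using assms x by simp
  then have "X - {x} \<noteq> {}" by (metis card.empty not_one_le_zero)
  then obtain y where y: "y \<in> X" "y \<noteq> x" by blast
  show ?thesis
  proof (cases "x < y")
    case True then show ?thesis using x y by blast
  next
    case False then have "y < x" using y by simp
    then show ?thesis using x y by blast
  qed
qed

locale dc =
  fixes \<pi> :: "nat list" and t :: nat
  assumes perm: "is_perm \<pi>" and c: "cls \<pi>" and t: "t < length \<pi>"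
  and above: "\<And>j. t < j \<Longrightarrow> j < length \<pi> \<Longrightarrow> \<pi>!j < \<pi>!t"
  and ex: "\<exists>i<t. \<pi>!i < \<pi>!t"
begin

definition "n = length \<pi>"
definition "v = \<pi>!t"
definition "NN = {i. i < t \<and> v < \<pi>!i}"
definition "SS = {i. i < t \<and> \<pi>!i < v}"
definition "a = card NN"
definition "c = card SS"
definition "b = n - 1 - t"

lemma inj: "i < n \<Longrightarrow> j < n \<Longrightarrow> \<pi>!i = \<pi>!j \<Longrightarrow> i = j"
  using perm_inj[OF perm] by (simp add: n_def)

lemma finN: "finite NN" by (simp add: NN_def)
lemma finS: "finite SS" by (simp add: SS_def)

lemma NS_part: "NN \<union> SS = {..<t}" "NN \<inter> SS = {}"
proof -
  show "NN \<union> SS = {..<t}"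
  proof
    show "NN \<union> SS \<subseteq> {..<t}" by (auto simp: NN_def SS_def)
    show "{..<t} \<subseteq> NN \<union> SS"
    proof
      fix i assume "i \<in> {..<t}"
      then have "i < t" by simp
      then have "\<pi>!i \<noteq> v" using inj[of i t] t by (auto simp: v_def n_def)
      then show "i \<in> NN \<union> SS" using \<open>i < t\<close> by (auto simp: NN_def SS_def)
    qed
  qed
  show "NN \<inter> SS = {}" by (auto simp: NN_def SS_def)
qed

lemma ac: "a + c = t"
proof -
  have "card (NN \<union> SS) = card NN + card SS" using NS_part(2) finN finS by (simp add: card_Un_disjoint)
  then show ?thesis using NS_part(1) by (simp add: a_def c_def)
qed

lemma cpos: "1 \<le> c"
proof -
  obtain i where "i < t" "\<pi>!i < \<pi>!t" using ex by blast
  then have "i \<in> SS" by (simp add: SS_def v_def)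
  then show ?thesis using finS c_def by (metis One_nat_def Suc_leI card_gt_0_iff empty_iff)
qed

lemma nabc: "n = a + b + c + 1"
  using ac t by (simp add: b_def n_def)

lemma vval: "v = c + b + 1"
proof -
  have "{i. i < n \<and> \<pi>!i < v} = SS \<union> {t<..<n}"
  proof
    show "{i. i < n \<and> \<pi>!i < v} \<subseteq> SS \<union> {t<..<n}"
    proof
      fix i assume i: "i \<in> {i. i < n \<and> \<pi>!i < v}"
      then have "i \<noteq> t" by (auto simp: v_def)
      then show "i \<in> SS \<union> {t<..<n}" using i by (auto simp: SS_def)
    qed
    show "SS \<union> {t<..<n} \<subseteq> {i. i < n \<and> \<pi>!i < v}"
      using above t by (auto simp: SS_def v_def n_def)
  qed
  moreover have "card (SS \<union> {t<..<n}) = c + b"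
    using finS by (subst card_Un_disjoint) (auto simp: SS_def c_def b_def)
  moreover have "card {i. i < n \<and> \<pi>!i < v} = v - 1"
    using perm_count[OF perm, of v] perm_nth_range[OF perm t] by (simp add: n_def v_def)
  moreover have "1 \<le> v" using perm_nth_range[OF perm t] by (simp add: v_def)
  ultimately show ?thesis by simp
qed

lemma C1: assumes "u \<in> NN" "s \<in> SS" "s' \<in> SS" "s < s'" "s' < u" shows False
proof -
  have "u < t" "\<pi>!s < \<pi>!t" "\<pi>!s' < \<pi>!t" "\<pi>!t < \<pi>!u" using assms by (auto simp: NN_def SS_def v_def)
  then show False using c t assms(4,5) unfolding cls_def by blast
qed

lemma N_le: assumes u: "u \<in> NN" shows "u \<le> a"
proof (rule ccontr)
  assume "\<not> u \<le> a"
  then have ua: "a < u" by simp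
  have ut: "u < t" using u by (simp add: NN_def)
  have sub: "{..<u} \<subseteq> (SS \<inter> {..<u}) \<union> (NN \<inter> {..<u})"
  proof
    fix i assume i: "i \<in> {..<u}"
    then have "i \<in> {..<t}" using ut by simp
    then have "i \<in> NN \<union> SS" by (simp only: NS_part(1))
    then show "i \<in> (SS \<inter> {..<u}) \<union> (NN \<inter> {..<u})" using i by blast
  qed
  have "NN \<inter> {..<u} \<subset> NN" using u by auto
  then have cN: "card (NN \<inter> {..<u}) < a" unfolding a_def by (rule psubset_card_mono[OF finN])
  have "card {..<u} \<le> card ((SS \<inter> {..<u}) \<union> (NN \<inter> {..<u}))"
    by (rule card_mono[OF _ sub]) (simp add: finS finN)
  then have "u \<le> card ((SS \<inter> {..<u}) \<union> (NN \<inter> {..<u}))" by simp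
  also have "\<dots> \<le> card (SS \<inter> {..<u}) + card (NN \<inter> {..<u})" by (rule card_Un_le)
  finally have "2 \<le> card (SS \<inter> {..<u})" using cN ua by linarith
  then obtain s s' where "s \<in> SS \<inter> {..<u}" "s' \<in> SS \<inter> {..<u}" "s < s'"
    using two_elems[of "SS \<inter> {..<u}"] by auto
  then show False using C1[OF u] by auto
qed

lemma at: "a < t" using ac cpos by simp

lemma S_low_card: "card (SS \<inter> {..a}) = 1"
proof -
  have e: "{..a} = (SS \<inter> {..a}) \<union> NN"
  proof
    show "{..a} \<subseteq> (SS \<inter> {..a}) \<union> NN"
    proof
      fix i assume i: "i \<in> {..a}"
      then have "i \<in> {..<t}" using at by simp
      then have "i \<in> NN \<union> SS" by (simp only: NS_part(1))
      then show "i \<in> (SS \<inter> {..a}) \<union> NN" using i by blast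
    qed
    show "(SS \<inter> {..a}) \<union> NN \<subseteq> {..a}" using N_le by auto
  qed
  have "card ((SS \<inter> {..a}) \<union> NN) = card (SS \<inter> {..a}) + card NN"
    by (rule card_Un_disjoint) (use finS finN NS_part(2) in auto)
  then have "card {..a} = card (SS \<inter> {..a}) + card NN" using e by simp
  then show ?thesis by (simp add: a_def)
qed

definition "p = (THE i. i \<in> SS \<inter> {..a})"

lemma p_prop: "SS \<inter> {..a} = {p}"
proof -
  obtain x where x: "SS \<inter> {..a} = {x}" using S_low_card by (rule card_1_singletonE)
  then show ?thesis by (simp add: p_def)
qed

lemma p_le: "p \<le> a" and p_S: "p \<in> SS" using p_prop by auto

lemma pos_le_a: "i \<le> a \<Longrightarrow> i \<noteq> p \<Longrightarrow> i \<in> NN"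
proof -
  assume i: "i \<le> a" "i \<noteq> p"
  have "i \<notin> SS" using p_prop i by auto
  moreover have "i \<in> {..<t}" using i at by simp
  then have "i \<in> NN \<union> SS" by (simp only: NS_part(1))
  ultimately show "i \<in> NN" by blast
qed

lemma pos_mid: assumes "a < i" "i < t" shows "i \<in> SS"
proof -
  have "i \<in> {..<t}" using assms by simp
  then have "i \<in> NN \<union> SS" by (simp only: NS_part(1))
  moreover have "i \<notin> NN" using N_le assms by fastforce
  ultimately show ?thesis by blast
qed

lemma C2: assumes "t < d" "d < n" "s \<in> SS" "s' \<in> SS" "s < s'" "\<pi>!s < \<pi>!d" "\<pi>!s' < \<pi>!d" shows False
proof -
  have "s' < t" "\<pi>!d < \<pi>!t" "d < length \<pi>" using assms above by (auto simp: SS_def n_def)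
  then show False using c assms unfolding cls_def by blast
qed

lemma E_val: assumes d: "t < d" "d < n" shows "\<pi>!d \<le> b + 1"
proof (rule ccontr)
  assume "\<not> \<pi>!d \<le> b + 1"
  then have big: "b + 2 \<le> \<pi>!d" by simp
  let ?Y = "{i. i < n \<and> \<pi>!i < \<pi>!d}"
  have cY: "card ?Y = \<pi>!d - 1"
    using perm_count[OF perm, of "\<pi>!d"] perm_nth_range[OF perm, of d] d by (simp add: n_def)
  have sub: "?Y \<subseteq> (SS \<inter> ?Y) \<union> ({t<..<n} - {d})"
  proof
    fix i assume i: "i \<in> ?Y"
    then have "\<pi>!i < v" using above[of d] d by (simp add: v_def n_def)
    moreover have "i \<noteq> t" using i above[of d] d by (auto simp: n_def)
    moreover have "i \<noteq> d" using i by auto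
    ultimately show "i \<in> (SS \<inter> ?Y) \<union> ({t<..<n} - {d})" using i above
      by (auto simp: SS_def v_def n_def)
  qed
  have "card ({t<..<n} - {d}) = b - 1" using d by (simp add: b_def)
  then have "\<pi>!d - 1 \<le> card (SS \<inter> ?Y) + (b - 1)"
    using card_mono[OF _ sub] card_Un_le[of "SS \<inter> ?Y" "{t<..<n} - {d}"] cY by simp
  moreover have "1 \<le> b" using d by (simp add: b_def)
  ultimately have "2 \<le> card (SS \<inter> ?Y)" using big by linarith
  then obtain s s' where "s \<in> SS \<inter> ?Y" "s' \<in> SS \<inter> ?Y" "s < s'"
    using two_elems[of "SS \<inter> ?Y"] finS by auto
  then show False using C2[OF d] by auto
qed

lemma Z_card: "card (SS \<inter> {i. \<pi>!i < b + 2}) = 1"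
proof -
  let ?Z = "{i. i < n \<and> \<pi>!i < b + 2}"
  have cZ: "card ?Z = b + 1"
    using perm_count[OF perm, of "b+2"] nabc cpos by (simp add: n_def)
  have e: "?Z = (SS \<inter> {i. \<pi>!i < b + 2}) \<union> {t<..<n}"
  proof
    show "?Z \<subseteq> (SS \<inter> {i. \<pi>!i < b + 2}) \<union> {t<..<n}"
    proof
      fix i assume i: "i \<in> ?Z"
      have "\<pi>!i < v" using i vval cpos by auto
      then have "i \<noteq> t" by (auto simp: v_def)
      then show "i \<in> (SS \<inter> {i. \<pi>!i < b + 2}) \<union> {t<..<n}" using i \<open>\<pi>!i < v\<close>
        by (auto simp: SS_def)
    qed
    show "(SS \<inter> {i. \<pi>!i < b + 2}) \<union> {t<..<n} \<subseteq> ?Z"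
      using E_val t by (auto simp: SS_def n_def) (metis less_Suc_eq_le add_2_eq_Suc' le_imp_less_Suc)
  qed
  have "card ?Z = card (SS \<inter> {i. \<pi>!i < b + 2}) + card {t<..<n}"
    unfolding e by (rule card_Un_disjoint) (auto simp: SS_def finS)
  then show ?thesis using cZ by (simp add: b_def)
qed

definition "m = (THE i. i \<in> SS \<inter> {i. \<pi>!i < b + 2})"

lemma m_prop: "SS \<inter> {i. \<pi>!i < b + 2} = {m}"
proof -
  obtain x where x: "SS \<inter> {i. \<pi>!i < b + 2} = {x}" using Z_card by (rule card_1_singletonE)
  then show ?thesis by (simp add: m_def)
qed

lemma m_S: "m \<in> SS" and m_val: "\<pi>!m \<le> b + 1"
proof -
  have "m \<in> SS \<inter> {i. \<pi>!i < b + 2}" using m_prop by simp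
  then show "m \<in> SS" "\<pi>!m \<le> b + 1" by auto
qed

lemma S_high: "s \<in> SS \<Longrightarrow> s \<noteq> m \<Longrightarrow> b + 2 \<le> \<pi>!s"
  using m_prop by (metis IntI mem_Collect_eq not_le singletonD)

lemma S_val: "s \<in> SS \<Longrightarrow> 1 \<le> \<pi>!s \<and> \<pi>!s \<le> c + b"
  using vval perm_nth_range[OF perm, of s] t by (auto simp: SS_def n_def)

lemma N_val: "s \<in> NN \<Longrightarrow> c + b + 2 \<le> \<pi>!s \<and> \<pi>!s \<le> n"
  using vval perm_nth_range[OF perm, of s] t by (auto simp: NN_def n_def)

lemma E_val1: "t < d \<Longrightarrow> d < n \<Longrightarrow> 1 \<le> \<pi>!d"
  using perm_nth_range[OF perm, of d] by (simp add: n_def)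

end


context dc begin

definition "eT j = (if j = 0 then p else a + j)"
definition "r1 = map (\<lambda>i. if i = p then 1 else \<pi>!i - (c+b)) [0..<a+1]"
definition "sg = map (\<lambda>j. if eT j = m then 1 else \<pi>!(eT j) - b) [0..<c]"
definition "r2 = map (\<lambda>j. if j = 0 then \<pi>!m else \<pi>!(t+j)) [0..<b+1]"

lemma eT_S: "j < c \<Longrightarrow> eT j \<in> SS"
  using p_S pos_mid[of "a + j"] ac by (auto simp: eT_def)

lemma eT_inj: "i < c \<Longrightarrow> j < c \<Longrightarrow> eT i = eT j \<Longrightarrow> i = j"
  using p_le by (auto simp: eT_def split: if_splits)

lemma r1_nth: "i < a + 1 \<Longrightarrow> r1!i = (if i = p then 1 else \<pi>!i - (c+b))"
  by (simp add: r1_def del: upt_Suc)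
lemma sg_nth: "j < c \<Longrightarrow> sg!j = (if eT j = m then 1 else \<pi>!(eT j) - b)"
  by (simp add: sg_def)
lemma r2_nth: "j < b + 1 \<Longrightarrow> r2!j = (if j = 0 then \<pi>!m else \<pi>!(t+j))"
  by (simp add: r2_def del: upt_Suc)

lemma r1_len: "length r1 = a + 1" by (simp add: r1_def)
lemma sg_len: "length sg = c" by (simp add: sg_def)
lemma r2_len: "length r2 = b + 1" by (simp add: r2_def)

lemma Nv: "i < a + 1 \<Longrightarrow> i \<noteq> p \<Longrightarrow> c + b + 2 \<le> \<pi>!i \<and> \<pi>!i \<le> n"
  using pos_le_a N_val by auto

lemma r1_perm: "is_perm r1"
proof (rule perm_of)
  show "distinct r1" unfolding distinct_conv_nth r1_len
  proof (intro allI impI)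
    fix i j assume h: "i < a + 1" "j < a + 1" "i \<noteq> j"
    show "r1!i \<noteq> r1!j"
    proof
      assume e: "r1!i = r1!j"
      show False
      proof (cases "i = p")
        case True
        then show False using e h Nv[of j] r1_nth by auto
      next
        case False
        show False
        proof (cases "j = p")
          case True then show False using e h Nv[of i] r1_nth False by auto
        next
          case F2: False
          then have "\<pi>!i = \<pi>!j" using e h Nv[of i] Nv[of j] r1_nth False by auto
          then show False using inj[of i j] h at nabc by simp
        qed
      qed
    qed
  qed
  show "\<forall>x\<in>set r1. 1 \<le> x \<and> x \<le> length r1"
  proof
    fix x assume "x \<in> set r1"
    then obtain i where i: "i < a + 1" "x = r1!i" by (auto simp: in_set_conv_nth r1_len)
    then show "1 \<le> x \<and> x \<le> length r1" using Nv[of i] r1_nth[of i] nabc r1_len by auto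
  qed
qed

lemma Sv: "j < c \<Longrightarrow> eT j \<noteq> m \<Longrightarrow> b + 2 \<le> \<pi>!(eT j) \<and> \<pi>!(eT j) \<le> c + b"
  using eT_S S_high S_val by auto

lemma sg_perm: "is_perm sg"
proof (rule perm_of)
  show "distinct sg" unfolding distinct_conv_nth sg_len
  proof (intro allI impI)
    fix i j assume h: "i < c" "j < c" "i \<noteq> j"
    then have ne: "eT i \<noteq> eT j" using eT_inj by blast
    show "sg!i \<noteq> sg!j"
    proof
      assume e: "sg!i = sg!j"
      show False
      proof (cases "eT i = m")
        case True
        then show False using e h Sv[of j] sg_nth ne by auto
      next
        case False
        show False
        proof (cases "eT j = m")
          case True then show False using e h Sv[of i] sg_nth False by auto
        next
          case F2: False
          then have "\<pi>!(eT i) = \<pi>!(eT j)" using e h Sv[of i] Sv[of j] sg_nth False by auto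
          moreover have "eT i < n" "eT j < n" using eT_S[of i] eT_S[of j] h t
            by (auto simp: SS_def n_def)
          ultimately show False using inj ne by blast
        qed
      qed
    qed
  qed
  show "\<forall>x\<in>set sg. 1 \<le> x \<and> x \<le> length sg"
  proof
    fix x assume "x \<in> set sg"
    then obtain i where i: "i < c" "x = sg!i" by (auto simp: in_set_conv_nth sg_len)
    then show "1 \<le> x \<and> x \<le> length sg" using Sv[of i] sg_nth[of i] cpos sg_len by auto
  qed
qed

lemma mn: "m < t" using m_S by (simp add: SS_def)

lemma Ev: "j < b + 1 \<Longrightarrow> 1 \<le> r2!j \<and> r2!j \<le> b + 1"
  using r2_nth[of j] S_val[OF m_S] m_val E_val[of "t+j"] E_val1[of "t+j"] nabc ac by auto

lemma r2_perm: "is_perm r2"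
proof (rule perm_of)
  show "distinct r2" unfolding distinct_conv_nth r2_len
  proof (intro allI impI)
    fix i j assume h: "i < b + 1" "j < b + 1" "i \<noteq> j"
    show "r2!i \<noteq> r2!j"
    proof
      assume e: "r2!i = r2!j"
      have pos: "\<And>k. k < b + 1 \<Longrightarrow> (if k = 0 then m else t + k) < n"
        using mn t nabc ac by (auto simp: n_def)
      have "\<And>k. k < b + 1 \<Longrightarrow> r2!k = \<pi>!(if k = 0 then m else t + k)" using r2_nth by auto
      then have "\<pi>!(if i = 0 then m else t + i) = \<pi>!(if j = 0 then m else t + j)" using e h by simp
      then have "(if i = 0 then m else t + i) = (if j = 0 then m else t + j)" using inj pos h by blast
      then show False using h mn by (auto split: if_splits)
    qed
  qed
  show "\<forall>x\<in>set r2. 1 \<le> x \<and> x \<le> length r2"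
    using Ev r2_len by (auto simp: in_set_conv_nth)
qed

lemma gl_pieces: "gl sg r1 r2"
  using sg_perm r1_perm r2_perm sg_len r1_len r2_len cpos by unfold_locales auto

lemma glue_eq: "glue sg r1 r2 = \<pi>"
proof -
  interpret G: gl sg r1 r2 by (rule gl_pieces)
  have A: "G.aa = a" using G.l1 r1_len by simp
  have B: "G.bb = b" using G.l2 r2_len by simp
  have C: "G.cc = c" using G.lS sg_len by simp
  have Q: "G.qq = \<pi>!m" using G.qq_eq r2_nth[of 0] by simp
  have Sgv: "\<And>j. j < c \<Longrightarrow> gv (\<pi>!m) b (sg!j) = \<pi>!(eT j)"
  proof -
    fix j assume j: "j < c"
    show "gv (\<pi>!m) b (sg!j) = \<pi>!(eT j)"
    proof (cases "eT j = m")
      case True then show ?thesis using sg_nth[OF j] by (simp add: gv_def)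
    next
      case False
      then have "sg!j = \<pi>!(eT j) - b" "b + 2 \<le> \<pi>!(eT j)" using sg_nth[OF j] Sv[OF j] by auto
      then have "sg!j \<noteq> 1" "sg!j + b = \<pi>!(eT j)" by linarith+
      then show ?thesis by (simp add: gv_def)
    qed
  qed
  show ?thesis
  proof (rule nth_equalityI)
    show "length (glue sg r1 r2) = length \<pi>" using G.len A B C nabc by (simp add: n_def)
    fix i assume "i < length (glue sg r1 r2)"
    then have i: "i < a + b + c + 1" using G.len A B C by simp
    have ng: "glue sg r1 r2 ! i = (if i \<le> a then (if r1!i = 1 then gv (\<pi>!m) b (sg!0) else r1!i + c + b)
             else if i < a + c then gv (\<pi>!m) b (sg!(i-a))
             else if i = a + c then c + b + 1 else r2!(i - (a+c)))"
      using G.nth_gen[of i] i A B C Q by simp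
    consider "i \<le> a" "i = p" | "i \<le> a" "i \<noteq> p" | "a < i" "i < a + c" | "i = a + c" | "a + c < i"
      by linarith
    then show "glue sg r1 r2 ! i = \<pi> ! i"
    proof cases
      case 1
      then show ?thesis using ng r1_nth[of i] Sgv[of 0] cpos by (simp add: eT_def)
    next
      case 2
      then show ?thesis using ng r1_nth[of i] Nv[of i] by auto
    next
      case 3
      then have "eT (i - a) = i" by (simp add: eT_def)
      then show ?thesis using ng 3 Sgv[of "i - a"] by simp
    next
      case 4
      then show ?thesis using ng vval ac at by (simp add: v_def)
    next
      case 5
      then show ?thesis using ng r2_nth[of "i - (a+c)"] ac i by simp
    qed
  qed
qed

lemma decomp_main: "\<exists>\<sigma> \<rho>1 \<rho>2. gl \<sigma> \<rho>1 \<rho>2 \<and> \<pi> = glue \<sigma> \<rho>1 \<rho>2 \<and> length \<rho>1 - 1 + length \<sigma> = t"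
  using gl_pieces glue_eq r1_len sg_len ac by (intro exI[of _ sg] exI[of _ r1] exI[of _ r2]) auto

end

lemma decomp:
  assumes "is_perm \<pi>" "cls \<pi>" "t < length \<pi>" "\<And>j. t < j \<Longrightarrow> j < length \<pi> \<Longrightarrow> \<pi>!j < \<pi>!t"
    "\<exists>i<t. \<pi>!i < \<pi>!t"
  shows "\<exists>\<sigma> \<rho>1 \<rho>2. gl \<sigma> \<rho>1 \<rho>2 \<and> \<pi> = glue \<sigma> \<rho>1 \<rho>2 \<and> length \<rho>1 - 1 + length \<sigma> = t"
proof -
  interpret dc \<pi> t using assms by unfold_locales auto
  show ?thesis by (rule decomp_main)
qed



lemma emb_Suc: "emb Suc \<beta> (x # \<beta>)"
  by (simp add: emb_def)

lemma cons_perm: "is_perm \<beta> \<Longrightarrow> is_perm (Suc (length \<beta>) # \<beta>)"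
  by (auto simp: is_perm_def)

lemma cons_max:
  assumes p: "is_perm \<beta>" and j: "j < length \<beta>"
  shows "(Suc (length \<beta>) # \<beta>) ! Suc j < Suc (length \<beta>)"
  using perm_nth_range[OF p j] by simp

lemma sucimg: assumes "0 < i" "i < Suc n" shows "i \<in> Suc ` {..<n}"
proof
  show "i = Suc (i - 1)" using assms by simp
  show "i - 1 \<in> {..<n}" using assms by simp
qed

lemma cons_cls: assumes p: "is_perm \<beta>" shows "cls (Suc (length \<beta>) # \<beta>) \<longleftrightarrow> cls \<beta>"
proof
  assume "cls (Suc (length \<beta>) # \<beta>)" then show "cls \<beta>" using emb_cls[OF emb_Suc] by blast
next
  assume c: "cls \<beta>"
  let ?r = "Suc (length \<beta>) # \<beta>"
  show "cls ?r" unfolding cls_def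
  proof
    assume "\<exists>i1 i2 i3 i4. i1 < i2 \<and> i2 < i3 \<and> i3 < i4 \<and> i4 < length ?r \<and>
      ?r!i1 < ?r!i4 \<and> ?r!i2 < ?r!i4 \<and> ?r!i4 < ?r!i3"
    then obtain i1 i2 i3 i4 where q: "i1 < i2" "i2 < i3" "i3 < i4" "i4 < length ?r"
      "?r!i1 < ?r!i4" "?r!i2 < ?r!i4" "?r!i4 < ?r!i3" by blast
    have "i1 \<noteq> 0"
    proof
      assume "i1 = 0"
      then have "?r!i4 > Suc (length \<beta>)" using q by simp
      moreover obtain j where "i4 = Suc j" "j < length \<beta>" using q by (cases i4) auto
      ultimately show False using cons_max[OF p] by (metis order_less_asym)
    qed
    then have "i1 \<in> Suc ` {..<length \<beta>}" "i2 \<in> Suc ` {..<length \<beta>}" "i3 \<in> Suc ` {..<length \<beta>}"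
      "i4 \<in> Suc ` {..<length \<beta>}" using q by (auto intro!: sucimg)
    then show False using emb_cls_ex[OF emb_Suc c q(1-3) q(5-7)] by blast
  qed
qed

lemma cons_occK: assumes p: "is_perm \<beta>" and ne: "\<tau> \<noteq> []"
  shows "occK (Suc (length \<beta>) # \<beta>) \<tau> = {} \<longleftrightarrow> occK \<beta> \<tau> = {}"
proof
  assume h: "occK (Suc (length \<beta>) # \<beta>) \<tau> = {}"
  show "occK \<beta> \<tau> = {}"
  proof (rule ccontr)
    assume "occK \<beta> \<tau> \<noteq> {}"
    then obtain js j where o: "(js, j) \<in> occK \<beta> \<tau>" by auto
    then have "\<forall>i\<in>set js. i < length \<beta>" "j < length \<beta>" by (auto simp: occK_def occL_def)
    then have "(map Suc js, Suc j) \<in> occK (Suc (length \<beta>) # \<beta>) \<tau>" using emb_occK[OF emb_Suc] o by blast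
    then show False using h by simp
  qed
next
  assume h: "occK \<beta> \<tau> = {}"
  let ?r = "Suc (length \<beta>) # \<beta>"
  show "occK ?r \<tau> = {}"
  proof (rule ccontr)
    assume "occK ?r \<tau> \<noteq> {}"
    then obtain ix j where o: "(ix, j) \<in> occK ?r \<tau>" by auto
    then have b: "\<forall>i\<in>set ix. i < j \<and> ?r!i < ?r!j" "j < length ?r" "length ix = length \<tau>"
      by (auto simp: occK_def occL_def)
    have "ix \<noteq> []" using b(3) ne by auto
    then obtain i0 where i0: "i0 \<in> set ix" by (meson list.set_sel(1))
    then have "j \<noteq> 0" using b(1) by fastforce
    then obtain j' where j': "j = Suc j'" "j' < length \<beta>" using b by (cases j) auto
    have "\<forall>i\<in>set ix. i \<noteq> 0"
    proof
      fix i assume "i \<in> set ix"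
      then have lt: "?r!i < ?r!j" using b by auto
      show "i \<noteq> 0"
      proof
        assume "i = 0"
        then have "Suc (length \<beta>) < ?r!(Suc j')" using lt j' by simp
        then show False using cons_max[OF p j'(2)] by simp
      qed
    qed
    then have "set ix \<subseteq> Suc ` {..<length \<beta>}" using b j'
      by (auto intro!: sucimg)
    moreover have "j \<in> Suc ` {..<length \<beta>}" using j' by auto
    ultimately obtain js j2 where "(js, j2) \<in> occK \<beta> \<tau>" using emb_occK_ex[OF emb_Suc o] by blast
    then show False using h by simp
  qed
qed



context gl begin

lemma glue_inj:
  assumes g: "gl \<sigma>' \<rho>1' \<rho>2'" and l: "length \<sigma>' = length \<sigma>" "length \<rho>1' = length \<rho>1" "length \<rho>2' = length \<rho>2"
  and e: "glue \<sigma>' \<rho>1' \<rho>2' = \<pi>"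
  shows "\<sigma>' = \<sigma> \<and> \<rho>1' = \<rho>1 \<and> \<rho>2' = \<rho>2"
proof -
  interpret G: gl \<sigma>' \<rho>1' \<rho>2' by (rule g)
  have A: "G.aa = aa" "G.bb = bb" "G.cc = cc" using l G.l1 G.l2 G.lS l1 l2 lS by auto
  have tl2: "tl \<rho>2' = tl \<rho>2"
  proof (rule nth_equalityI)
    show "length (tl \<rho>2') = length (tl \<rho>2)" using l by simp
    fix j assume j0: "j < length (tl \<rho>2')"
    then have j: "j < bb" using G.l2 A by simp
    have "\<rho>2'!(Suc j) = \<rho>2!(Suc j)"
      using G.nthE[of "aa+cc+Suc j"] nthE[of "aa+cc+Suc j"] e A j by simp
    then show "tl \<rho>2' ! j = tl \<rho>2 ! j" using j0 l by (simp add: nth_tl)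
  qed
  have r2: "\<rho>2' = \<rho>2"
  proof -
    obtain x xs where x: "\<rho>2 = x # xs" using n2 by (cases \<rho>2) auto
    obtain y ys where y: "\<rho>2' = y # ys" using G.n2 by (cases \<rho>2') auto
    have ys: "ys = xs" using tl2 x y by simp
    have "set \<rho>2 = set \<rho>2'" using p2 G.p2 l by (simp add: is_perm_def)
    moreover have "x \<notin> set xs" "y \<notin> set xs" using p2 G.p2 x y ys by (auto simp: is_perm_def)
    ultimately have "x = y" using x y ys by auto
    then show ?thesis using x y ys by simp
  qed
  then have Q: "G.qq = qq" by (simp add: G.qq_def qq_def)
  have r1: "\<rho>1' = \<rho>1"
  proof (rule nth_equalityI)
    show "length \<rho>1' = length \<rho>1" using l by simp
    fix i assume "i < length \<rho>1'"
    then have i: "i \<le> aa" using G.l1 A by simp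
    have f: "\<And>x. x = \<rho>1!i \<longleftrightarrow> (if \<pi>!i \<le> cc + bb then x = 1 else x = \<pi>!i - cc - bb)"
    proof -
      fix x
      show "x = \<rho>1!i \<longleftrightarrow> (if \<pi>!i \<le> cc + bb then x = 1 else x = \<pi>!i - cc - bb)"
      proof (cases "i = p")
        case True then show ?thesis using valS[of 0] cpos p_prop by (simp add: eS_def)
      next
        case False then show ?thesis using valN[OF i False] nthN[OF i False] by auto
      qed
    qed
    have f': "\<And>x. x = \<rho>1'!i \<longleftrightarrow> (if \<pi>!i \<le> cc + bb then x = 1 else x = \<pi>!i - cc - bb)"
    proof -
      fix x
      show "x = \<rho>1'!i \<longleftrightarrow> (if \<pi>!i \<le> cc + bb then x = 1 else x = \<pi>!i - cc - bb)"
      proof (cases "i = G.p")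
        case True then show ?thesis using G.valS[of 0] G.cpos G.p_prop e A by (simp add: G.eS_def)
      next
        case False then show ?thesis using G.valN[of i] G.nthN[of i] False i e A by auto
      qed
    qed
    show "\<rho>1'!i = \<rho>1!i" using f[of "\<rho>1'!i"] f'[of "\<rho>1'!i"] by simp
  qed
  then have P: "G.p = p" by (simp add: G.p_def p_def)
  have eSe: "\<And>j. G.eS j = eS j" using P A by (simp add: G.eS_def eS_def)
  have s: "\<sigma>' = \<sigma>"
  proof (rule nth_equalityI)
    show "length \<sigma>' = length \<sigma>" using l by simp
    fix j assume "j < length \<sigma>'"
    then have j: "j < cc" using G.lS A by simp
    have "gv qq bb (\<sigma>'!j) = gv qq bb (\<sigma>!j)"
      using G.nthS[of j] nthS[of j] e A Q eSe j by simp
    then show "\<sigma>'!j = \<sigma>!j"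
      using gv_inj perm_nth_range[OF p\<sigma>, of j] perm_nth_range[OF G.p\<sigma>, of j] j lS G.lS A by auto
  qed
  show ?thesis using s r1 r2 by simp
qed

end


lemma perms_finite: "finite {\<pi>. is_perm \<pi> \<and> length \<pi> = n}"
proof (rule finite_subset)
  show "{\<pi>. is_perm \<pi> \<and> length \<pi> = n} \<subseteq> {xs. set xs \<subseteq> {1..n} \<and> length xs = n}"
    by (auto simp: is_perm_def)
  show "finite {xs. set xs \<subseteq> {1..n} \<and> length xs = n}"
    by (rule finite_lists_length_eq) simp
qed

lemma cls_short: "length xs < 4 \<Longrightarrow> cls xs"
  unfolding cls_def by auto

lemma perm_one: "is_perm xs \<Longrightarrow> length xs = 1 \<Longrightarrow> xs = [1]"
  by (cases xs) (auto simp: is_perm_def)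

locale cnt =
  fixes \<tau> :: "nat list"
  assumes tp: "is_perm \<tau>" and tne: "\<tau> \<noteq> []"
begin

definition "Ks n = {\<pi>. is_perm \<pi> \<and> cls \<pi> \<and> occK \<pi> \<tau> = {} \<and> length \<pi> = n}"
definition "Hs n = {\<pi>. is_perm \<pi> \<and> cls \<pi> \<and> occL \<pi> \<tau> = {} \<and> length \<pi> = n}"
definition "Js n = {\<pi>. is_perm \<pi> \<and> cls \<pi> \<and> occK \<pi> \<tau> = {} \<and> card (occL \<pi> \<tau>) = 1 \<and> length \<pi> = n}"
definition "Gs n = {\<pi>. is_perm \<pi> \<and> cls \<pi> \<and> card (occK \<pi> \<tau>) = 1 \<and> length \<pi> = n}"

lemma fin_Ks: "finite (Ks n)" by (rule finite_subset[OF _ perms_finite[of n]]) (auto simp: Ks_def)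
lemma fin_Hs: "finite (Hs n)" by (rule finite_subset[OF _ perms_finite[of n]]) (auto simp: Hs_def)
lemma fin_Js: "finite (Js n)" by (rule finite_subset[OF _ perms_finite[of n]]) (auto simp: Js_def)
lemma fin_Gs: "finite (Gs n)" by (rule finite_subset[OF _ perms_finite[of n]]) (auto simp: Gs_def)

lemma occK_nonempty_pos: "(ix, j) \<in> occK \<pi> \<tau> \<Longrightarrow> \<exists>i\<in>set ix. i < j \<and> \<pi>!i < \<pi>!j"
proof -
  assume h: "(ix, j) \<in> occK \<pi> \<tau>"
  then have "length ix = length \<tau>" by (simp add: occK_def occL_def)
  then have "ix \<noteq> []" using tne by auto
  then obtain i where "i \<in> set ix" by (meson list.set_sel(1))
  then show ?thesis using h by (auto simp: occK_def)
qed

lemma occK_one: "occK [1] \<tau> = {}"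
proof (rule ccontr)
  assume "occK [1] \<tau> \<noteq> {}"
  then obtain ix j where h: "(ix, j) \<in> occK [1] \<tau>" by auto
  then obtain i where "i < j" using occK_nonempty_pos by blast
  moreover have "j < 1" using h by (simp add: occK_def)
  ultimately show False by simp
qed

lemma occK_sub_occL: "occL \<pi> \<tau> = {} \<Longrightarrow> occK \<pi> \<tau> = {}"
  by (auto simp: occK_def)

lemma Hs0: "Hs 0 = {[]}"
proof -
  have "occL [] \<tau> = {}"
  proof (rule ccontr)
    assume "occL [] \<tau> \<noteq> {}"
    then obtain ix where h: "ix \<in> occL [] \<tau>" by auto
    then have "length ix = length \<tau>" "\<forall>i\<in>set ix. i < 0" by (auto simp: occL_def)
    then show False using tne by (cases ix) auto
  qed
  then show ?thesis by (auto simp: Hs_def is_perm_def cls_def)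
qed

lemma Ks0: "Ks 0 = {[]}"
proof -
  have "occK [] \<tau> = {}" by (auto simp: occK_def)
  then show ?thesis by (auto simp: Ks_def is_perm_def cls_def)
qed

lemma glueK:
  assumes \<alpha>: "\<alpha> \<in> Hs c" and r: "r \<in> Ks d" and c: "1 \<le> c" and d: "1 \<le> d"
  shows "gl \<alpha> [1] r" "glue \<alpha> [1] r \<in> Ks (c + d)"
proof -
  show g: "gl \<alpha> [1] r" using \<alpha> r c d by unfold_locales (auto simp: Hs_def Ks_def is_perm_def)
  interpret G: gl \<alpha> "[1]" r by (rule g)
  have "occK (glue \<alpha> [1] r) \<tau> = {}"
  proof (rule ccontr)
    assume "occK (glue \<alpha> [1] r) \<tau> \<noteq> {}"
    then obtain ix j where h: "(ix, j) \<in> occK (glue \<alpha> [1] r) \<tau>" by auto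
    have "occL \<alpha> \<tau> = {}" "occK \<alpha> \<tau> = {}" "occK r \<tau> = {}" using \<alpha> r occK_sub_occL by (auto simp: Hs_def Ks_def)
    then show False using G.occK_cases[OF h] occK_one by auto
  qed
  moreover have "cls (glue \<alpha> [1] r)" using G.cls_iff \<alpha> r cls_short[of "[1]"] by (auto simp: Hs_def Ks_def)
  moreover have "length (glue \<alpha> [1] r) = c + d" using G.len G.l1 G.l2 G.lS \<alpha> r by (auto simp: Hs_def Ks_def)
  ultimately show "glue \<alpha> [1] r \<in> Ks (c + d)" using G.perm_pi by (simp add: Ks_def)
qed

definition "P0 n = (\<lambda>\<beta>. Suc n # \<beta>) ` Ks n"
definition "Pc n c = (\<lambda>(\<alpha>, r). glue \<alpha> [1] r) ` (Hs c \<times> Ks (Suc n - c))"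

lemma P0_sub: "P0 n \<subseteq> Ks (Suc n)"
proof
  fix \<pi> assume "\<pi> \<in> P0 n"
  then obtain \<beta> where b: "\<beta> \<in> Ks n" "\<pi> = Suc n # \<beta>" by (auto simp: P0_def)
  then have "length \<beta> = n" "is_perm \<beta>" by (auto simp: Ks_def)
  then show "\<pi> \<in> Ks (Suc n)" using b cons_perm cons_cls cons_occK[OF _ tne] by (auto simp: Ks_def)
qed

lemma Pc_sub: assumes c: "c \<in> {1..n}" shows "Pc n c \<subseteq> Ks (Suc n)"
proof
  fix \<pi> assume "\<pi> \<in> Pc n c"
  then obtain \<alpha> r where ar: "\<alpha> \<in> Hs c" "r \<in> Ks (Suc n - c)" "\<pi> = glue \<alpha> [1] r" by (auto simp: Pc_def)
  have "glue \<alpha> [1] r \<in> Ks (c + (Suc n - c))" using glueK(2)[OF ar(1,2)] c by auto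
  then show "\<pi> \<in> Ks (Suc n)" using c ar by simp
qed

lemma Pc_max: assumes c: "c \<in> {1..n}" and p: "\<pi> \<in> Pc n c" shows "\<pi>!c = Suc n"
proof -
  obtain \<alpha> r where ar: "\<alpha> \<in> Hs c" "r \<in> Ks (Suc n - c)" "\<pi> = glue \<alpha> [1] r" using p by (auto simp: Pc_def)
  have g: "gl \<alpha> [1] r" using glueK(1)[OF ar(1,2)] c by auto
  interpret G: gl \<alpha> "[1]" r by (rule g)
  have "G.aa = 0" "G.cc = c" "G.bb = n - c" using G.l1 G.lS G.l2 ar c by (auto simp: Hs_def Ks_def)
  then show ?thesis using G.nthT ar c by auto
qed

lemma K_decomp: "Ks (Suc n) = P0 n \<union> (\<Union>c\<in>{1..n}. Pc n c)"
proof
  show "P0 n \<union> (\<Union>c\<in>{1..n}. Pc n c) \<subseteq> Ks (Suc n)" using P0_sub Pc_sub by blast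
  show "Ks (Suc n) \<subseteq> P0 n \<union> (\<Union>c\<in>{1..n}. Pc n c)"
  proof
    fix \<rho> assume r: "\<rho> \<in> Ks (Suc n)"
    then have p: "is_perm \<rho>" and cl: "cls \<rho>" and o: "occK \<rho> \<tau> = {}" and l: "length \<rho> = Suc n"
      by (auto simp: Ks_def)
    obtain t where t: "t < Suc n" "\<rho>!t = Suc n" using perm_has[OF p, of "Suc n"] l by auto
    have rng: "\<And>j. j < Suc n \<Longrightarrow> \<rho>!j \<le> Suc n" using perm_nth_range[OF p] l by auto
    have ne: "\<And>j. j < Suc n \<Longrightarrow> j \<noteq> t \<Longrightarrow> \<rho>!j \<noteq> \<rho>!t" using perm_inj[OF p] t l by auto
    show "\<rho> \<in> P0 n \<union> (\<Union>c\<in>{1..n}. Pc n c)"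
    proof (cases "t = 0")
      case True
      define \<beta> where "\<beta> = tl \<rho>"
      have e: "\<rho> = Suc n # \<beta>" using True t l unfolding \<beta>_def by (cases \<rho>) auto
      have lb: "length \<beta> = n" using l by (simp add: \<beta>_def)
      have d: "distinct \<beta>" "Suc n \<notin> set \<beta>" using p e by (auto simp: is_perm_def)
      have "set \<rho> = {1..Suc n}" using p l by (simp add: is_perm_def)
      then have "insert (Suc n) (set \<beta>) = {1..Suc n}" using e by simp
      then have "insert (Suc n) (set \<beta>) = insert (Suc n) {1..n}" by (simp add: atLeastAtMostSuc_conv)
      then have "set \<beta> = {1..n}" using d(2) insert_ident[of "Suc n" "set \<beta>" "{1..n}"] by simp
      then have pb: "is_perm \<beta>" using d lb by (simp add: is_perm_def)
      have "\<beta> \<in> Ks n" using pb cl o e lb cons_cls[OF pb] cons_occK[OF pb tne] by (auto simp: Ks_def)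
      then show ?thesis using e by (auto simp: P0_def)
    next
      case False
      have ab: "\<rho>!j < \<rho>!t" if "t < j" "j < length \<rho>" for j
      proof -
        have "\<rho>!j \<le> Suc n" "\<rho>!j \<noteq> \<rho>!t" using rng ne that l by auto
        then show ?thesis using t by simp
      qed
      have ex: "\<exists>i<t. \<rho>!i < \<rho>!t" using rng[of 0] ne[of 0] False t by (intro exI[of _ 0]) auto
      obtain \<sigma> \<rho>1 \<rho>2 where dc: "gl \<sigma> \<rho>1 \<rho>2" "\<rho> = glue \<sigma> \<rho>1 \<rho>2" "length \<rho>1 - 1 + length \<sigma> = t"
        using decomp[OF p cl _ ab ex] t l by auto
      interpret G: gl \<sigma> \<rho>1 \<rho>2 by (rule dc(1))
      have tt: "G.aa + G.cc = t" using dc(3) G.l1 G.lS by simp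
      have "G.cc + G.bb + 1 = Suc n" using G.nthT dc(2) tt t by simp
      moreover have "G.aa + G.bb + G.cc + 1 = Suc n" using G.len dc(2) l by simp
      ultimately have a0: "G.aa = 0" by simp
      then have r1: "\<rho>1 = [1]" using perm_one[OF G.p1] G.l1 by simp
      have c: "length \<sigma> \<in> {1..n}" using tt a0 G.lS False t by auto
      have sH: "\<sigma> \<in> Hs (length \<sigma>)"
      proof -
        have "occL \<sigma> \<tau> = {}"
        proof (rule ccontr)
          assume "occL \<sigma> \<tau> \<noteq> {}"
          then obtain js where "js \<in> occL \<sigma> \<tau>" by auto
          then show False using G.occK_A1 dc(2) o by auto
        qed
        then show ?thesis using G.p\<sigma> G.cls_iff dc(2) cl by (simp add: Hs_def)
      qed
      have r2K: "\<rho>2 \<in> Ks (Suc n - length \<sigma>)"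
      proof -
        have "occK \<rho>2 \<tau> = {}"
        proof (rule ccontr)
          assume "occK \<rho>2 \<tau> \<noteq> {}"
          then obtain js j where "(js, j) \<in> occK \<rho>2 \<tau>" by auto
          then show False using G.occK_A4 dc(2) o by auto
        qed
        moreover have "length \<rho>2 = Suc n - length \<sigma>" using G.l2 G.len dc(2) l a0 G.lS by simp
        ultimately show ?thesis using G.p2 G.cls_iff dc(2) cl by (simp add: Ks_def)
      qed
      have "\<rho> \<in> Pc n (length \<sigma>)" unfolding Pc_def using sH r2K dc(2) r1 by force
      then show ?thesis using c by blast
    qed
  qed
qed

lemma card_P0: "card (P0 n) = card (Ks n)"
  unfolding P0_def by (rule card_image) (auto simp: inj_on_def)

lemma card_Pc: assumes c: "c \<in> {1..n}" shows "card (Pc n c) = card (Hs c) * card (Ks (Suc n - c))"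
proof -
  have "inj_on (\<lambda>(\<alpha>, r). glue \<alpha> [1] r) (Hs c \<times> Ks (Suc n - c))"
  proof (rule inj_onI)
    fix x y assume x: "x \<in> Hs c \<times> Ks (Suc n - c)" and y: "y \<in> Hs c \<times> Ks (Suc n - c)"
      and e: "(\<lambda>(\<alpha>, r). glue \<alpha> [1] r) x = (\<lambda>(\<alpha>, r). glue \<alpha> [1] r) y"
    obtain \<alpha> r where xx: "x = (\<alpha>, r)" by (cases x)
    obtain \<alpha>' r' where yy: "y = (\<alpha>', r')" by (cases y)
    have g: "gl \<alpha> [1] r" "gl \<alpha>' [1] r'" using glueK(1) x y xx yy c by auto
    interpret G: gl \<alpha> "[1]" r by (rule g(1))
    have "\<alpha>' = \<alpha> \<and> r' = r"
      using G.glue_inj[OF g(2)] x y xx yy e by (auto simp: Hs_def Ks_def)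
    then show "x = y" using xx yy by simp
  qed
  then show ?thesis unfolding Pc_def by (simp add: card_image card_cartesian_product)
qed

lemma K_rec: "card (Ks (Suc n)) = card (Ks n) + (\<Sum>c\<in>{1..n}. card (Hs c) * card (Ks (Suc n - c)))"
proof -
  have fin: "finite (Pc n c)" "finite (P0 n)" for c
    unfolding Pc_def P0_def using fin_Hs fin_Ks by auto
  have disj1: "P0 n \<inter> (\<Union>c\<in>{1..n}. Pc n c) = {}"
  proof (rule ccontr)
    assume "P0 n \<inter> (\<Union>c\<in>{1..n}. Pc n c) \<noteq> {}"
    then obtain \<pi> where "\<pi> \<in> P0 n" "\<pi> \<in> (\<Union>c\<in>{1..n}. Pc n c)" by blast
    then obtain c where h: "\<pi> \<in> P0 n" "c \<in> {1..n}" "\<pi> \<in> Pc n c" by blast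
    have "\<pi>!0 = Suc n" using h(1) by (auto simp: P0_def)
    moreover have "\<pi>!c = Suc n" using Pc_max h by auto
    moreover have "is_perm \<pi>" "length \<pi> = Suc n" using h(1) P0_sub by (auto simp: Ks_def)
    ultimately show False using perm_inj[of \<pi> 0 c] h(2) by auto
  qed
  have disj2: "\<forall>c\<in>{1..n}. \<forall>c'\<in>{1..n}. c \<noteq> c' \<longrightarrow> Pc n c \<inter> Pc n c' = {}"
  proof (intro ballI impI)
    fix c c' assume c: "c \<in> {1..n}" "c' \<in> {1..n}" "c \<noteq> c'"
    show "Pc n c \<inter> Pc n c' = {}"
    proof (rule ccontr)
      assume "Pc n c \<inter> Pc n c' \<noteq> {}"
      then obtain \<pi> where h: "\<pi> \<in> Pc n c" "\<pi> \<in> Pc n c'" by auto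
      have "\<pi>!c = Suc n" "\<pi>!c' = Suc n" using Pc_max h c by auto
      moreover have "is_perm \<pi>" "length \<pi> = Suc n" using h(1) Pc_sub c by (auto simp: Ks_def)
      ultimately show False using perm_inj[of \<pi> c c'] c by auto
    qed
  qed
  have "card (Ks (Suc n)) = card (P0 n) + card (\<Union>c\<in>{1..n}. Pc n c)"
    unfolding K_decomp using fin disj1 by (intro card_Un_disjoint) auto
  also have "card (\<Union>c\<in>{1..n}. Pc n c) = (\<Sum>c\<in>{1..n}. card (Pc n c))"
    using fin disj2 by (intro card_UN_disjoint) auto
  finally show ?thesis using card_P0 card_Pc by simp
qed

end


context gl begin

lemma occK_single:
  assumes "occL \<sigma> \<tau> = {js0}" "occK \<sigma> \<tau> = {}" "occK \<rho>1 \<tau> = {}" "occK \<rho>2 \<tau> = {}"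
  shows "occK \<pi> \<tau> = {(map eS js0, aa + cc)}"
proof
  show "occK \<pi> \<tau> \<subseteq> {(map eS js0, aa + cc)}"
  proof
    fix x assume x: "x \<in> occK \<pi> \<tau>"
    obtain ix j where xx: "x = (ix, j)" by (cases x)
    show "x \<in> {(map eS js0, aa + cc)}" using occK_cases[of ix j \<tau>] x xx assms by auto
  qed
  show "{(map eS js0, aa + cc)} \<subseteq> occK \<pi> \<tau>" using occK_A1[of js0 \<tau>] assms by auto
qed

end

context cnt begin

lemma finite_occL: "finite (occL \<pi> p)"
proof (rule finite_subset)
  show "occL \<pi> p \<subseteq> {xs. set xs \<subseteq> {..<length \<pi>} \<and> length xs = length p}" by (auto simp: occL_def)
  show "finite {xs. set xs \<subseteq> {..<length \<pi>} \<and> length xs = length p}"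
    by (rule finite_lists_length_eq) simp
qed

lemma Js_ne: "\<sigma> \<in> Js c \<Longrightarrow> 1 \<le> c"
proof (rule ccontr)
  assume h: "\<sigma> \<in> Js c" "\<not> 1 \<le> c"
  then have "\<sigma> = []" by (cases \<sigma>) (auto simp: Js_def)
  moreover have "occL [] \<tau> = {}"
  proof (rule ccontr)
    assume "occL [] \<tau> \<noteq> {}"
    then obtain ix where h: "ix \<in> occL [] \<tau>" by auto
    then have "length ix = length \<tau>" "\<forall>i\<in>set ix. i < 0" by (auto simp: occL_def)
    then show False using tne by (cases ix) auto
  qed
  ultimately show False using h by (simp add: Js_def)
qed

definition "Qc m i c = (\<lambda>(\<sigma>, (r1, r2)). glue \<sigma> r1 r2) ` (Js c \<times> (Ks (i - c + 1) \<times> Ks (m - i + 1)))"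

lemma glueG:
  assumes s: "\<sigma> \<in> Js c" and r1: "r1 \<in> Ks a1" and r2: "r2 \<in> Ks b1" and a1: "1 \<le> a1" and b1: "1 \<le> b1"
  shows "gl \<sigma> r1 r2" "glue \<sigma> r1 r2 \<in> Gs (c + a1 + b1 - 1)"
    "\<exists>ix. occK (glue \<sigma> r1 r2) \<tau> = {(ix, a1 - 1 + c)}" "glue \<sigma> r1 r2 ! (a1 - 1 + c) = c + b1"
proof -
  have c: "1 \<le> c" using Js_ne s by simp
  show g: "gl \<sigma> r1 r2" using s r1 r2 a1 b1 c by unfold_locales (auto simp: Js_def Ks_def)
  interpret G: gl \<sigma> r1 r2 by (rule g)
  have A: "G.aa = a1 - 1" "G.bb = b1 - 1" "G.cc = c" using G.l1 G.l2 G.lS s r1 r2 by (auto simp: Js_def Ks_def)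
  obtain js0 where js0: "occL \<sigma> \<tau> = {js0}" using s by (auto simp: Js_def card_1_singleton_iff)
  have o: "occK (glue \<sigma> r1 r2) \<tau> = {(map G.eS js0, G.aa + G.cc)}"
    using G.occK_single[OF js0] s r1 r2 by (auto simp: Js_def Ks_def)
  then show "\<exists>ix. occK (glue \<sigma> r1 r2) \<tau> = {(ix, a1 - 1 + c)}" using A by auto
  show "glue \<sigma> r1 r2 ! (a1 - 1 + c) = c + b1" using G.nthT A b1 by simp
  have "cls (glue \<sigma> r1 r2)" using G.cls_iff s r1 r2 by (auto simp: Js_def Ks_def)
  moreover have "length (glue \<sigma> r1 r2) = c + a1 + b1 - 1" using G.len A a1 b1 by simp
  ultimately show "glue \<sigma> r1 r2 \<in> Gs (c + a1 + b1 - 1)" using G.perm_pi o by (simp add: Gs_def)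
qed

definition "SI m = Sigma {..m} (\<lambda>i. {..i})"

lemma Qc_props:
  assumes ic: "(i, c) \<in> SI m" and p: "\<pi> \<in> Qc m i c"
  shows "\<pi> \<in> Gs (Suc m)" "\<exists>ix. occK \<pi> \<tau> = {(ix, i)}" "\<pi>!i = c + (m - i) + 1"
proof -
  obtain \<sigma> r1 r2 where h: "\<sigma> \<in> Js c" "r1 \<in> Ks (i - c + 1)" "r2 \<in> Ks (m - i + 1)" "\<pi> = glue \<sigma> r1 r2"
    using p by (auto simp: Qc_def)
  have le: "c \<le> i" "i \<le> m" using ic by (auto simp: SI_def)
  note gg = glueG[OF h(1-3)]
  show "\<pi> \<in> Gs (Suc m)" using gg(2) h(4) le by simp
  show "\<exists>ix. occK \<pi> \<tau> = {(ix, i)}" using gg(3) h(4) le by simp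
  show "\<pi>!i = c + (m - i) + 1" using gg(4) h(4) le by simp
qed

lemma card_Qc: assumes ic: "(i, c) \<in> SI m"
  shows "card (Qc m i c) = card (Js c) * (card (Ks (i - c + 1)) * card (Ks (m - i + 1)))"
proof -
  have "inj_on (\<lambda>(\<sigma>, (r1, r2)). glue \<sigma> r1 r2) (Js c \<times> (Ks (i - c + 1) \<times> Ks (m - i + 1)))"
  proof (rule inj_onI)
    fix x y assume x: "x \<in> Js c \<times> (Ks (i - c + 1) \<times> Ks (m - i + 1))"
      and y: "y \<in> Js c \<times> (Ks (i - c + 1) \<times> Ks (m - i + 1))"
      and e: "(\<lambda>(\<sigma>, (r1, r2)). glue \<sigma> r1 r2) x = (\<lambda>(\<sigma>, (r1, r2)). glue \<sigma> r1 r2) y"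
    obtain s r1 r2 where xx: "x = (s, (r1, r2))" by (cases x) auto
    obtain s' r1' r2' where yy: "y = (s', (r1', r2'))" by (cases y) auto
    have g: "gl s r1 r2" "gl s' r1' r2'" using glueG(1) x y xx yy by auto
    interpret G: gl s r1 r2 by (rule g(1))
    have "s' = s \<and> r1' = r1 \<and> r2' = r2"
      using G.glue_inj[OF g(2)] x y xx yy e by (auto simp: Js_def Ks_def)
    then show "x = y" using xx yy by simp
  qed
  then show ?thesis unfolding Qc_def by (simp add: card_image card_cartesian_product)
qed

lemma G_decomp: "Gs (Suc m) = (\<Union>(i, c)\<in>SI m. Qc m i c)"
proof
  show "(\<Union>(i, c)\<in>SI m. Qc m i c) \<subseteq> Gs (Suc m)" using Qc_props(1) by blast
  show "Gs (Suc m) \<subseteq> (\<Union>(i, c)\<in>SI m. Qc m i c)"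
  proof
    fix \<pi> assume pg: "\<pi> \<in> Gs (Suc m)"
    then have p: "is_perm \<pi>" and cl: "cls \<pi>" and l: "length \<pi> = Suc m" and c1: "card (occK \<pi> \<tau>) = 1"
      by (auto simp: Gs_def)
    obtain ix0 t where o: "occK \<pi> \<tau> = {(ix0, t)}" using c1 by (auto simp: card_1_singleton_iff)
    have o0: "(ix0, t) \<in> occK \<pi> \<tau>" using o by simp
    have tl: "t < length \<pi>" using o0 by (simp add: occK_def)
    have ab: "\<pi>!j < \<pi>!t" if j: "t < j" "j < length \<pi>" for j
    proof (rule ccontr)
      assume "\<not> \<pi>!j < \<pi>!t"
      moreover have "\<pi>!j \<noteq> \<pi>!t" using perm_inj[OF p j(2) tl] j by auto
      ultimately have gt: "\<pi>!t < \<pi>!j" by simp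
      have "(ix0, j) \<in> occK \<pi> \<tau>" using o0 j gt by (auto simp: occK_def)
      then show False using o j by auto
    qed
    have ex: "\<exists>i<t. \<pi>!i < \<pi>!t" using occK_nonempty_pos[OF o0] by auto
    obtain \<sigma> \<rho>1 \<rho>2 where dc: "gl \<sigma> \<rho>1 \<rho>2" "\<pi> = glue \<sigma> \<rho>1 \<rho>2" "length \<rho>1 - 1 + length \<sigma> = t"
      using decomp[OF p cl tl ab ex] by auto
    interpret G: gl \<sigma> \<rho>1 \<rho>2 by (rule dc(1))
    have tt: "G.aa + G.cc = t" using dc(3) G.l1 G.lS by simp
    have oG: "occK (glue \<sigma> \<rho>1 \<rho>2) \<tau> = {(ix0, t)}" using o dc(2) by simp
    have k\<sigma>: "occK \<sigma> \<tau> = {}"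
    proof (rule ccontr)
      assume "occK \<sigma> \<tau> \<noteq> {}"
      then obtain js j where h: "(js, j) \<in> occK \<sigma> \<tau>" by auto
      then show False using G.occK_A2[OF h] G.occK_A2_pos[OF h] oG tt by auto
    qed
    have k1: "occK \<rho>1 \<tau> = {}"
    proof (rule ccontr)
      assume "occK \<rho>1 \<tau> \<noteq> {}"
      then obtain js j where h: "(js, j) \<in> occK \<rho>1 \<tau>" by auto
      then show False using G.occK_A3[OF h] G.occK_A3_pos[OF h] oG tt by auto
    qed
    have k2: "occK \<rho>2 \<tau> = {}"
    proof (rule ccontr)
      assume "occK \<rho>2 \<tau> \<noteq> {}"
      then obtain js j where h: "(js, j) \<in> occK \<rho>2 \<tau>" by auto
      then show False using G.occK_A4[OF h] G.occK_A4_pos[OF h tne] oG tt by auto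
    qed
    have cL: "card (occL \<sigma> \<tau>) = 1"
    proof -
      have fin: "finite (occK (glue \<sigma> \<rho>1 \<rho>2) \<tau>)" using oG by simp
      have inj: "inj_on (\<lambda>js. (map G.eS js, G.aa + G.cc)) (occL \<sigma> \<tau>)"
      proof (rule inj_onI)
        fix x y assume "x \<in> occL \<sigma> \<tau>" "y \<in> occL \<sigma> \<tau>"
          "(\<lambda>js. (map G.eS js, G.aa + G.cc)) x = (\<lambda>js. (map G.eS js, G.aa + G.cc)) y"
        then show "x = y" using G.inj_map_eS[of x y] G.lS by (simp add: occL_def)
      qed
      have sub: "(\<lambda>js. (map G.eS js, G.aa + G.cc)) ` occL \<sigma> \<tau> \<subseteq> occK (glue \<sigma> \<rho>1 \<rho>2) \<tau>"
        using G.occK_A1 by blast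
      have "card (occL \<sigma> \<tau>) \<le> card (occK (glue \<sigma> \<rho>1 \<rho>2) \<tau>)"
        by (rule card_inj_on_le[OF inj sub fin])
      then have le: "card (occL \<sigma> \<tau>) \<le> 1" using oG by simp
      have "occL \<sigma> \<tau> \<noteq> {}"
      proof
        assume e: "occL \<sigma> \<tau> = {}"
        have "(ix0, t) \<in> occK (glue \<sigma> \<rho>1 \<rho>2) \<tau>" using oG by simp
        then show False using G.occK_cases[of ix0 t \<tau>] e k\<sigma> k1 k2 by blast
      qed
      then have "card (occL \<sigma> \<tau>) \<noteq> 0" using finite_occL by simp
      then show ?thesis using le by simp
    qed
    have sJ: "\<sigma> \<in> Js (length \<sigma>)" using G.p\<sigma> G.cls_iff cl dc(2) k\<sigma> cL by (simp add: Js_def)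
    have r1K: "\<rho>1 \<in> Ks (t - length \<sigma> + 1)" using G.p1 G.cls_iff cl dc(2) k1 tt G.l1 G.lS by (simp add: Ks_def)
    have lens: "G.aa + G.bb + G.cc + 1 = Suc m" using G.len dc(2) l by simp
    have r2K: "\<rho>2 \<in> Ks (m - t + 1)" using G.p2 G.cls_iff cl dc(2) k2 tt G.l2 lens by (simp add: Ks_def)
    have ic: "(t, length \<sigma>) \<in> SI m" using tt lens G.lS by (auto simp: SI_def)
    have "\<pi> \<in> Qc m t (length \<sigma>)" unfolding Qc_def
      by (rule image_eqI[where x="(\<sigma>, (\<rho>1, \<rho>2))"]) (use sJ r1K r2K dc(2) in simp_all)
    then show "\<pi> \<in> (\<Union>(i, c)\<in>SI m. Qc m i c)" using ic by blast
  qed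
qed

lemma G_rec: "card (Gs (Suc m)) = (\<Sum>i\<le>m. \<Sum>c\<le>i. card (Js c) * (card (Ks (i - c + 1)) * card (Ks (m - i + 1))))"
proof -
  define A where "A = (\<lambda>(i,c). Qc m i c)"
  have finI: "finite (SI m)" unfolding SI_def by auto
  have finA: "\<forall>x\<in>SI m. finite (A x)"
  proof
    fix x assume "x \<in> SI m"
    obtain i c where xx: "x = (i, c)" by (cases x)
    show "finite (A x)" unfolding A_def xx Qc_def using fin_Js fin_Ks by simp
  qed
  have disj: "\<forall>x\<in>SI m. \<forall>y\<in>SI m. x \<noteq> y \<longrightarrow> A x \<inter> A y = {}"
  proof (intro ballI impI)
    fix x y assume x: "x \<in> SI m" and y: "y \<in> SI m" and ne: "x \<noteq> y"
    obtain i c where xx: "x = (i, c)" by (cases x)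
    obtain i' c' where yy: "y = (i', c')" by (cases y)
    show "A x \<inter> A y = {}"
    proof (rule ccontr)
      assume "A x \<inter> A y \<noteq> {}"
      then obtain \<pi> where h: "\<pi> \<in> Qc m i c" "\<pi> \<in> Qc m i' c'" unfolding A_def xx yy by auto
      have x': "(i, c) \<in> SI m" and y': "(i', c') \<in> SI m" using x y xx yy by auto
      obtain ix where o1: "occK \<pi> \<tau> = {(ix, i)}" using Qc_props(2)[OF x' h(1)] by blast
      obtain ix' where o2: "occK \<pi> \<tau> = {(ix', i')}" using Qc_props(2)[OF y' h(2)] by blast
      have ii: "i = i'" using o1 o2 by simp
      have "\<pi>!i = c + (m - i) + 1" by (rule Qc_props(3)[OF x' h(1)])
      moreover have "\<pi>!i' = c' + (m - i') + 1" by (rule Qc_props(3)[OF y' h(2)])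
      ultimately have "c = c'" using ii by simp
      then show False using ne xx yy ii by simp
    qed
  qed
  have "card (Gs (Suc m)) = card (\<Union> (A ` SI m))" unfolding A_def by (simp only: G_decomp)
  also have "\<dots> = (\<Sum>x\<in>SI m. card (A x))" by (rule card_UN_disjoint[OF finI finA disj])
  also have "\<dots> = (\<Sum>x\<in>SI m. (\<lambda>(i,c). card (Js c) * (card (Ks (i - c + 1)) * card (Ks (m - i + 1)))) x)"
  proof (rule sum.cong)
    fix x assume x: "x \<in> SI m"
    obtain i c where xx: "x = (i, c)" by (cases x)
    show "card (A x) = (\<lambda>(i,c). card (Js c) * (card (Ks (i - c + 1)) * card (Ks (m - i + 1)))) x"
      unfolding A_def xx using card_Qc x xx by simp
  qed simp
  also have "\<dots> = (\<Sum>i\<le>m. \<Sum>c\<le>i. card (Js c) * (card (Ks (i - c + 1)) * card (Ks (m - i + 1))))"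
    unfolding SI_def by (rule sum.Sigma[symmetric]) auto
  finally show ?thesis .
qed

lemma Gs0: "Gs 0 = {}"
  by (auto simp: Gs_def occK_def)

end

unbundle fps_syntax

context cnt begin

definition "Mf = Abs_fps (\<lambda>n. of_nat (card (Ks (Suc n))) :: rat)"
definition "Hf = Abs_fps (\<lambda>n. of_nat (card (Hs n)) :: rat)"
definition "Jf = Abs_fps (\<lambda>n. of_nat (card (Js n)) :: rat)"
definition "Gf = Abs_fps (\<lambda>n. of_nat (card (Gs n)) :: rat)"

lemma K_nat: "card (Ks (Suc n)) + card (Ks (Suc n)) =
   (if n = 0 then 1 else 0) + (if n = 0 then 0 else card (Ks n)) +
   (\<Sum>i=0..n. card (Hs i) * card (Ks (Suc (n - i))))"
proof -
  define S1 where "S1 = (\<Sum>c\<in>{1..n}. card (Hs c) * card (Ks (Suc n - c)))"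
  have r: "card (Ks (Suc n)) = card (Ks n) + S1" using K_rec by (simp add: S1_def)
  have "(\<Sum>i=0..n. card (Hs i) * card (Ks (Suc (n - i)))) =
        card (Hs 0) * card (Ks (Suc n)) + (\<Sum>i=Suc 0..n. card (Hs i) * card (Ks (Suc (n - i))))"
    by (simp add: sum.atLeast_Suc_atMost)
  also have "(\<Sum>i=Suc 0..n. card (Hs i) * card (Ks (Suc (n - i)))) = S1"
    unfolding S1_def by (rule sum.cong) (auto simp: Suc_diff_le)
  finally have s: "(\<Sum>i=0..n. card (Hs i) * card (Ks (Suc (n - i)))) = card (Ks (Suc n)) + S1"
    using Hs0 by simp
  show ?thesis using r s Ks0 by (cases "n = 0") auto
qed

lemma M_eq: "Mf + Mf = 1 + fps_X * Mf + Hf * Mf"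
proof (rule fps_ext)
  fix n
  have "(Hf * Mf) $ n = (\<Sum>i=0..n. of_nat (card (Hs i)) * of_nat (card (Ks (Suc (n - i)))))"
    by (simp add: fps_mult_nth Hf_def Mf_def)
  also have "\<dots> = of_nat (\<Sum>i=0..n. card (Hs i) * card (Ks (Suc (n - i))))" by simp
  finally have hm: "(Hf * Mf) $ n = of_nat (\<Sum>i=0..n. card (Hs i) * card (Ks (Suc (n - i))))" .
  have xm: "(fps_X * Mf) $ n = of_nat (if n = 0 then 0 else card (Ks n))"
    by (cases n) (auto simp: Mf_def)
  have "(Mf + Mf) $ n = of_nat (card (Ks (Suc n)) + card (Ks (Suc n)))"
    by (simp only: fps_add_nth Mf_def fps_nth_Abs_fps of_nat_add)
  also have "\<dots> = of_nat ((if n = 0 then 1 else 0) + (if n = 0 then 0 else card (Ks n)) +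
   (\<Sum>i=0..n. card (Hs i) * card (Ks (Suc (n - i)))))" by (simp only: K_nat)
  also have "\<dots> = (1 + fps_X * Mf + Hf * Mf) $ n"
    unfolding fps_add_nth hm xm by (cases "n = 0") auto
  finally show "(Mf + Mf) $ n = (1 + fps_X * Mf + Hf * Mf) $ n" .
qed

lemma MD: "Mf * (2 - fps_X - Hf) = 1"
proof -
  have "Mf * (2 - fps_X - Hf) = Mf * 2 - Mf * fps_X - Mf * Hf"
    by (simp only: right_diff_distrib)
  also have "\<dots> = (Mf + Mf) - fps_X * Mf - Hf * Mf"
    by (simp only: mult_2_right mult.commute)
  also have "\<dots> = 1" using M_eq by simp
  finally show ?thesis .
qed

lemma G_eq: "Gf = fps_X * (Jf * Mf * Mf)"
proof (rule fps_ext)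
  fix n
  show "Gf $ n = (fps_X * (Jf * Mf * Mf)) $ n"
  proof (cases n)
    case 0 then show ?thesis using Gs0 by (simp add: Gf_def)
  next
    case (Suc m)
    have "(Jf * Mf * Mf) $ m = (\<Sum>i=0..m. (\<Sum>c=0..i. of_nat (card (Js c)) * of_nat (card (Ks (Suc (i - c))))) * of_nat (card (Ks (Suc (m - i)))))"
      by (simp add: fps_mult_nth Jf_def Mf_def)
    also have "\<dots> = of_nat (\<Sum>i\<le>m. \<Sum>c\<le>i. card (Js c) * (card (Ks (i - c + 1)) * card (Ks (m - i + 1))))"
      by (simp add: atLeast0AtMost sum_distrib_right mult.assoc)
    also have "\<dots> = of_nat (card (Gs (Suc m)))" by (simp only: G_rec)
    finally show ?thesis using Suc by (simp add: Gf_def)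
  qed
qed

lemma final: "Gf = fps_X * Jf / (2 - fps_X - Hf)\<^sup>2"
proof -
  define D where "D = 2 - fps_X - Hf"
  have D0: "D $ 0 = 1" using Hs0 by (simp add: D_def Hf_def)
  have "D\<^sup>2 * Mf\<^sup>2 = (Mf * D)\<^sup>2" by (simp only: power_mult_distrib mult.commute)
  also have "\<dots> = 1" using MD by (simp add: D_def)
  finally have "D\<^sup>2 * Mf\<^sup>2 = 1" .
  then have inv: "inverse (D\<^sup>2) = Mf\<^sup>2" by (rule fps_inverse_unique)
  have "(D\<^sup>2) $ 0 \<noteq> 0" using D0 by (simp add: power2_eq_square fps_mult_nth)
  then have "fps_X * Jf / D\<^sup>2 = fps_X * Jf * Mf\<^sup>2" using inv by (simp add: fps_divide_unit)
  also have "\<dots> = Gf" using G_eq by (simp add: power2_eq_square algebra_simps)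
  finally show ?thesis by (simp add: D_def)
qed

end


theorem mainTheorem7:
  fixes \<tau> :: "nat list"
  assumes "\<tau> \<in> Av_1243_2143" and "\<tau> \<noteq> []"
  defines "k \<equiv> length \<tau> + 1"
  defines "G \<equiv> gf {\<pi> \<in> Av_1243_2143. card (occurrences \<pi> (\<tau> @ [k])) = 1}"
  defines "H \<equiv> gf {\<pi> \<in> Av_1243_2143. avoids \<pi> \<tau>}"
  defines "J \<equiv> gf {\<pi> \<in> Av_1243_2143. avoids \<pi> (\<tau> @ [k]) \<and> card (occurrences \<pi> \<tau>) = 1}"
  shows "G = fps_X * J / (2 - fps_X - H)\<^sup>2"
proof -
  have tp: "is_perm \<tau>" using assms(1) Av_iff by blast
  interpret C: cnt \<tau> using tp assms(2) by unfold_locales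
  have "G = C.Gf"
  proof -
    have "{\<pi> \<in> {\<pi> \<in> Av_1243_2143. card (occurrences \<pi> (\<tau> @ [k])) = 1}. length \<pi> = n} = C.Gs n" for n
      unfolding C.Gs_def k_def using card_occK[OF tp] Av_iff by auto
    then show ?thesis unfolding G_def gf_def C.Gf_def by simp
  qed
  moreover have "H = C.Hf"
  proof -
    have "{\<pi> \<in> {\<pi> \<in> Av_1243_2143. avoids \<pi> \<tau>}. length \<pi> = n} = C.Hs n" for n
      unfolding C.Hs_def using avoids_occL Av_iff by auto
    then show ?thesis unfolding H_def gf_def C.Hf_def by simp
  qed
  moreover have "J = C.Jf"
  proof -
    have "{\<pi> \<in> {\<pi> \<in> Av_1243_2143. avoids \<pi> (\<tau> @ [k]) \<and> card (occurrences \<pi> \<tau>) = 1}. length \<pi> = n} = C.Js n" for n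
      unfolding C.Js_def k_def using avoids_occK[OF tp] card_occurrences Av_iff by auto
    then show ?thesis unfolding J_def gf_def C.Jf_def by simp
  qed
  ultimately show ?thesis using C.final by simp
qed


end
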